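(* Let $a\in C[0,1]$ satisfy $a(0)=0$, $a>0$ on $(0,1]$, and suppose there is $\alpha\in(0,2)$ such that $x\mapsto\frac{x^\alpha}{a(x)}$ is nondecreasing. Let $T>0$ and $Q=(0,T)\times(0,1)$. Then the space $H^1(0,T;L^2_{\frac1a}(0,1))\cap L^2(0,T;H^2_{\frac1a}(0,1))$ is compactly embedded in $C([0,T];L^2_{\frac1a}(0,1))\cap L^2(Q)$.
   Context: $L^2_{\frac1a}(0,1)=\{u\in L^2(0,1):u/\sqrt a\in L^2(0,1)\}$ with norm $\|u\|^2=\int_0^1u^2/a\,dx$; $H^1_{\frac1a}(0,1)=L^2_{\frac1a}(0,1)\cap H^1_0(0,1)$ with norm $\|u\|^2_{L^2_{\frac1a}}+\|u_x\|^2_{L^2}$; $H^2_{\frac1a}(0,1)=\{u\in H^1_{\frac1a}(0,1): au_{xx}\in L^2_{\frac1a}(0,1)\}$ with norm $\|u\|^2_{H^1_{\frac1a}}+\|au_{xx}\|^2_{L^2_{\frac1a}}$. *)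

theory Defs
  imports "HOL-Analysis.Analysis"
begin

definition Qset :: "real \<Rightarrow> (real \<times> real) set" where
  "Qset T = {0<..<T} \<times> {0<..<1}"

definition L2w :: "(real \<Rightarrow> real) \<Rightarrow> (real \<Rightarrow> real) \<Rightarrow> bool" where
  "L2w a f \<longleftrightarrow> set_borel_measurable lborel {0<..<1} f
     \<and> set_integrable lborel {0<..<1} (\<lambda>x. (f x)^2)
     \<and> set_integrable lborel {0<..<1} (\<lambda>x. (f x)^2 / a x)"

definition nL2w :: "(real \<Rightarrow> real) \<Rightarrow> (real \<Rightarrow> real) \<Rightarrow> real" where
  "nL2w a f = (LINT x:{0<..<1}|lborel. (f x)^2 / a x)"

text \<open>f belongs to H^1_{1/a}(0,1) = L^2_{1/a} \<inter> H^1_0, with weak derivative g: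
  f agrees a.e. with x \<mapsto> \<integral>_0^x g, g \<in> L^2, and the trace at 1 vanishes.\<close>
definition H1w :: "(real \<Rightarrow> real) \<Rightarrow> (real \<Rightarrow> real) \<Rightarrow> (real \<Rightarrow> real) \<Rightarrow> bool" where
  "H1w a f g \<longleftrightarrow> L2w a f
     \<and> set_borel_measurable lborel {0<..<1} g
     \<and> set_integrable lborel {0<..<1} g
     \<and> set_integrable lborel {0<..<1} (\<lambda>x. (g x)^2)
     \<and> (LINT x:{0<..<1}|lborel. g x) = 0
     \<and> (AE x in lborel. x \<in> {0<..<1} \<longrightarrow> f x = (LINT y:{0<..<x}|lborel. g y))"

text \<open>f belongs to H^2_{1/a}(0,1), with weak derivative g and (locally integrable)
  weak second derivative h, such that a*h \<in> L^2_{1/a}.\<close>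
definition H2w :: "(real \<Rightarrow> real) \<Rightarrow> (real \<Rightarrow> real) \<Rightarrow> (real \<Rightarrow> real) \<Rightarrow> (real \<Rightarrow> real) \<Rightarrow> bool" where
  "H2w a f g h \<longleftrightarrow> H1w a f g
     \<and> set_borel_measurable lborel {0<..<1} h
     \<and> (\<forall>c d. 0 < c \<longrightarrow> c \<le> d \<longrightarrow> d < 1 \<longrightarrow> set_integrable lborel {c..d} h)
     \<and> (\<exists>k. AE x in lborel. x \<in> {0<..<1} \<longrightarrow>
            g x = k + (LBINT y=ereal (1/2)..ereal x. h y))
     \<and> L2w a (\<lambda>x. a x * h x)"

text \<open>u (with time derivative ut, space derivatives ux, uxx) belongs to
  H^1(0,T;L^2_{1/a}(0,1)) \<inter> L^2(0,T;H^2_{1/a}(0,1)); functions u t x.\<close>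
definition inX :: "(real \<Rightarrow> real) \<Rightarrow> real \<Rightarrow> (real \<Rightarrow> real \<Rightarrow> real) \<Rightarrow> (real \<Rightarrow> real \<Rightarrow> real)
    \<Rightarrow> (real \<Rightarrow> real \<Rightarrow> real) \<Rightarrow> (real \<Rightarrow> real \<Rightarrow> real) \<Rightarrow> bool" where
  "inX a T u ut ux uxx \<longleftrightarrow>
     set_borel_measurable lborel (Qset T) (case_prod u)
   \<and> set_borel_measurable lborel (Qset T) (case_prod ut)
   \<and> set_borel_measurable lborel (Qset T) (case_prod ux)
   \<and> set_borel_measurable lborel (Qset T) (case_prod uxx)
   \<and> (AE t in lborel. t \<in> {0<..<T} \<longrightarrow> H2w a (u t) (ux t) (uxx t))
   \<and> set_integrable lborel (Qset T) (\<lambda>(t,x). (u t x)^2 / a x)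
   \<and> set_integrable lborel (Qset T) (\<lambda>(t,x). (ux t x)^2)
   \<and> set_integrable lborel (Qset T) (\<lambda>(t,x). (a x * uxx t x)^2 / a x)
   \<and> set_integrable lborel (Qset T) (\<lambda>(t,x). (ut t x)^2 / a x)
   \<and> (\<exists>\<xi>. L2w a \<xi> \<and> (AE p in lborel. p \<in> Qset T \<longrightarrow>
          u (fst p) (snd p) = \<xi> (snd p) + (LINT s:{0<..<fst p}|lborel. ut s (snd p))))"

text \<open>Squared norm in H^1(0,T;L^2_{1/a}) \<inter> L^2(0,T;H^2_{1/a}) (an equivalent norm).\<close>
definition normX2 :: "(real \<Rightarrow> real) \<Rightarrow> real \<Rightarrow> (real \<Rightarrow> real \<Rightarrow> real) \<Rightarrow> (real \<Rightarrow> real \<Rightarrow> real)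
    \<Rightarrow> (real \<Rightarrow> real \<Rightarrow> real) \<Rightarrow> (real \<Rightarrow> real \<Rightarrow> real) \<Rightarrow> real" where
  "normX2 a T u ut ux uxx = (LINT p:Qset T|lborel.
      (case p of (t,x) \<Rightarrow> (u t x)^2 / a x + (ux t x)^2 + (a x * uxx t x)^2 / a x
                       + (ut t x)^2 / a x))"

text \<open>v is a (jointly measurable) element of C([0,T];L^2_{1/a}(0,1)) \<inter> L^2(Q).\<close>
definition inY :: "(real \<Rightarrow> real) \<Rightarrow> real \<Rightarrow> (real \<Rightarrow> real \<Rightarrow> real) \<Rightarrow> bool" where
  "inY a T v \<longleftrightarrow> (\<forall>t\<in>{0..T}. L2w a (v t))
     \<and> (\<forall>t0\<in>{0..T}. ((\<lambda>t. nL2w a (\<lambda>x. v t x - v t0 x)) \<longlongrightarrow> 0) (at t0 within {0..T}))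
     \<and> set_borel_measurable lborel (Qset T) (case_prod v)
     \<and> set_integrable lborel (Qset T) (\<lambda>(t,x). (v t x)^2)"

end

theory Submission
  imports Defs "HOL-Library.Diagonal_Subsequence"
begin

lemma quad_discr:
  fixes A B mu :: real
  assumes "mu \<ge> 0" and "\<And>m. 0 \<le> A - 2*m*B + m^2*mu"
  shows "B^2 \<le> mu * A"
proof (cases "mu > 0")
  case True
  have "0 \<le> A - 2*(B/mu)*B + (B/mu)^2*mu" by (rule assms(2))
  hence "0 \<le> A - B^2/mu" using True by (simp add: power2_eq_square field_simps)
  thus ?thesis using True by (simp add: field_simps)
next
  case False
  hence mu: "mu = 0" using assms(1) by simp
  show ?thesis
  proof (cases "B = 0")
    case True thus ?thesis using assms(2)[of 0] mu by simp
  next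
    case False
    have "0 \<le> A - 2*((A+1)/(2*B))*B" using assms(2)[of "(A+1)/(2*B)"] mu by simp
    also have "\<dots> = -1" using False by (simp add: field_simps)
    finally show ?thesis by simp
  qed
qed

lemma abs_le_1_sq: "\<bar>y::real\<bar> \<le> 1 + y^2"
proof -
  have "0 \<le> (\<bar>y\<bar> - 1)^2" by simp
  hence "0 \<le> \<bar>y\<bar>^2 - 2*\<bar>y\<bar> + 1" by (simp add: power2_eq_square algebra_simps)
  thus ?thesis by simp
qed

lemma CS_set:
  fixes f :: "real \<Rightarrow> real"
  assumes S: "S \<in> sets lborel" "emeasure lborel S < \<infinity>"
    and fm: "set_borel_measurable lborel S f"
    and f2: "set_integrable lborel S (\<lambda>x. (f x)^2)"
  shows "set_integrable lborel S f"
    and "(LINT x:S|lborel. f x)^2 \<le> measure lborel S * (LINT x:S|lborel. (f x)^2)"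
proof -
  have iS: "integrable lborel (indicat_real S)" using S by (rule integrable_real_indicator)
  have fm': "(\<lambda>x. indicator S x * f x) \<in> borel_measurable lborel"
    using fm by (simp add: set_borel_measurable_def)
  have f2': "integrable lborel (\<lambda>x. indicator S x * (f x)^2)"
    using f2 by (simp add: set_integrable_def)
  have bnd: "norm (indicator S x * f x) \<le> norm (indicator S x * (1 + (f x)^2))" for x
    using abs_le_1_sq[of "f x"] by (auto simp: indicator_def)
  have ii: "integrable lborel (\<lambda>x. indicator S x * (1 + (f x)^2))"
    using iS f2' by (simp add: distrib_left)
  have fi: "integrable lborel (\<lambda>x. indicator S x * f x)"
    by (rule Bochner_Integration.integrable_bound[OF ii fm']) (use bnd in simp)
  thus "set_integrable lborel S f" by (simp add: set_integrable_def)
  define A where "A = (LINT x:S|lborel. (f x)^2)"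
  define B where "B = (LINT x:S|lborel. f x)"
  define mu where "mu = measure lborel S"
  have "0 \<le> A - 2*m*B + m^2*mu" for m
  proof -
    have "0 \<le> (LINT x|lborel. indicator S x * (f x - m)^2)"
      by (rule integral_nonneg_AE) auto
    also have "(\<lambda>x. indicator S x * (f x - m)^2) = (\<lambda>x. indicator S x * (f x)^2 - 2*m*(indicator S x * f x) + m^2 * indicator S x)"
      by (auto simp: power2_eq_square algebra_simps)
    also have "(LINT x|lborel. indicator S x * (f x)^2 - 2*m*(indicator S x * f x) + m^2 * indicator S x) = A - 2*m*B + m^2*mu"
      using f2' fi iS S by (simp add: A_def B_def mu_def set_lebesgue_integral_def)
    finally show ?thesis .
  qed
  from quad_discr[OF _ this] show "B^2 \<le> mu * A" unfolding mu_def by simp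
qed

lemma set_int_nonneg:
  fixes f :: "'a \<Rightarrow> real"
  shows "(\<And>x. x \<in> A \<Longrightarrow> 0 \<le> f x) \<Longrightarrow> 0 \<le> (LINT x:A|M. f x)"
  unfolding set_lebesgue_integral_def by (rule integral_nonneg_AE) (auto simp: indicator_def)

lemma set_integral_mono_subset:
  fixes f :: "real \<Rightarrow> real"
  assumes "set_integrable lborel B f" "A \<in> sets lborel" "A \<subseteq> B" "\<And>x. x \<in> B \<Longrightarrow> 0 \<le> f x"
  shows "(LINT x:A|lborel. f x) \<le> (LINT x:B|lborel. f x)"
proof -
  have iA: "set_integrable lborel A f" by (rule set_integrable_subset[OF assms(1-3)])
  show ?thesis unfolding set_lebesgue_integral_def
    apply (rule integral_mono)
    using iA assms(1) apply (simp_all add: set_integrable_def)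
    using assms(3,4) by (auto simp: indicator_def)
qed

lemma prim_holderL:
  fixes g :: "real \<Rightarrow> real"
  assumes gm: "set_borel_measurable lborel {0<..<L} g"
    and g2: "set_integrable lborel {0<..<L} (\<lambda>x. (g x)^2)"
    and xy: "0 \<le> y" "y \<le> x" "x \<le> L"
  shows "((LINT z:{0<..<x}|lborel. g z) - (LINT z:{0<..<y}|lborel. g z))^2
          \<le> (x - y) * (LINT z:{0<..<L}|lborel. (g z)^2)"
proof -
  define D where "D = {0<..<x} - {0<..<y}"
  have Dsets: "D \<in> sets lborel" unfolding D_def by simp
  have DI: "D \<subseteq> {y..x}" using xy unfolding D_def by auto
  have D01: "D \<subseteq> {0<..<L}" using xy unfolding D_def by auto
  have Dfin: "emeasure lborel D < \<infinity>"
  proof -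
    have "emeasure lborel D \<le> emeasure lborel {y..x}" by (rule emeasure_mono[OF DI]) simp
    also have "\<dots> < \<infinity>" using xy by (simp add: emeasure_lborel_Icc_eq)
    finally show ?thesis .
  qed
  have mD: "measure lborel D \<le> x - y"
  proof -
    have "measure lborel D \<le> measure lborel {y..x}"
      by (rule measure_mono_fmeasurable[OF DI Dsets]) (simp add: fmeasurable_def emeasure_lborel_Icc_eq)
    also have "\<dots> = x - y" using xy by simp
    finally show ?thesis .
  qed
  have sub1: "{0<..<x} \<subseteq> {0<..<L}" "{0<..<y} \<subseteq> {0<..<L}" using xy by auto
  have gmD: "set_borel_measurable lborel D g" by (rule set_borel_measurable_subset[OF gm Dsets D01])
  have g2D: "set_integrable lborel D (\<lambda>x. (g x)^2)" by (rule set_integrable_subset[OF g2 Dsets D01])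
  have Lfin: "emeasure lborel {0<..<L} < \<infinity>" using xy by (simp add: emeasure_lborel_Ioo)
  have gi: "set_integrable lborel {0<..<L} g"
    using CS_set(1)[OF _ Lfin gm g2] by simp
  have gix: "set_integrable lborel {0<..<x} g" by (rule set_integrable_subset[OF gi _ sub1(1)]) simp
  have giy: "set_integrable lborel {0<..<y} g" by (rule set_integrable_subset[OF gi _ sub1(2)]) simp
  have giD: "set_integrable lborel D g" by (rule set_integrable_subset[OF gi Dsets D01])
  have un: "{0<..<x} = {0<..<y} \<union> D" using xy unfolding D_def by auto
  have "(LINT z:{0<..<x}|lborel. g z) = (LINT z:{0<..<y}|lborel. g z) + (LINT z:D|lborel. g z)"
    unfolding un by (rule set_integral_Un[OF _ giy giD]) (auto simp: D_def)
  hence "((LINT z:{0<..<x}|lborel. g z) - (LINT z:{0<..<y}|lborel. g z))^2 = (LINT z:D|lborel. g z)^2"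
    by simp
  also have "\<dots> \<le> measure lborel D * (LINT z:D|lborel. (g z)^2)"
    by (rule CS_set(2)[OF Dsets Dfin gmD g2D])
  also have "\<dots> \<le> (x - y) * (LINT z:{0<..<L}|lborel. (g z)^2)"
    apply (rule mult_mono[OF mD])
      apply (rule set_integral_mono_subset[OF g2 Dsets D01]) apply simp
    using xy apply simp
    by (rule set_int_nonneg) simp
  finally show ?thesis .
qed

lemma prim_holder0:
  fixes g :: "real \<Rightarrow> real"
  assumes gm: "set_borel_measurable lborel {0<..<1} g"
    and g2: "set_integrable lborel {0<..<1} (\<lambda>x. (g x)^2)"
    and xy: "0 \<le> y" "y \<le> x" "x \<le> 1"
  shows "((LINT z:{0<..<x}|lborel. g z) - (LINT z:{0<..<y}|lborel. g z))^2
          \<le> (x - y) * (LINT z:{0<..<1}|lborel. (g z)^2)"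
  by (rule prim_holderL[OF gm g2 xy])

lemma prim_holder:
  fixes g :: "real \<Rightarrow> real"
  assumes gm: "set_borel_measurable lborel {0<..<1} g"
    and g2: "set_integrable lborel {0<..<1} (\<lambda>x. (g x)^2)"
    and xy: "x \<in> {0..1}" "y \<in> {0..1}"
  shows "((LINT z:{0<..<x}|lborel. g z) - (LINT z:{0<..<y}|lborel. g z))^2
          \<le> \<bar>x - y\<bar> * (LINT z:{0<..<1}|lborel. (g z)^2)"
proof (cases "y \<le> x")
  case True thus ?thesis using prim_holder0[OF gm g2, of y x] xy by simp
next
  case False thus ?thesis using prim_holder0[OF gm g2, of x y] xy by (simp add: power2_commute)
qed

lemma powr_set_integrable:
  assumes "b > (-1::real)"
  shows "set_integrable lborel {0<..<1} (\<lambda>x::real. x powr b)"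
proof -
  have "(\<lambda>x::real. x powr b) integrable_on {0<..1}"
    by (rule integrable_on_powr_from_0'[OF assms]) simp
  hence "(\<lambda>x::real. x powr b) absolutely_integrable_on {0<..1}"
    by (rule nonnegative_absolutely_integrable_1) simp
  hence "integrable lebesgue (\<lambda>x::real. indicator {0<..1} x * x powr b)"
    by (simp add: set_integrable_def)
  then have "integrable lborel (\<lambda>x::real. indicator {0<..1} x * x powr b)"
  proof -
    have m: "(\<lambda>x::real. indicator {0<..1} x * x powr b) \<in> borel_measurable lborel" by measurable
    show ?thesis using integrable_completion[OF m] \<open>integrable lebesgue _\<close> by simp
  qed
  hence "set_integrable lborel {0<..1} (\<lambda>x::real. x powr b)"
    by (simp add: set_integrable_def)
  thus ?thesis by (rule set_integrable_subset) auto
qed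

lemma a_upper:
  assumes "continuous_on {0..1} (a::real\<Rightarrow>real)"
  shows "\<exists>M>0. \<forall>x\<in>{0..1}. a x \<le> M"
proof -
  have "compact (a ` {0..1})" by (rule compact_continuous_image[OF assms]) simp
  then obtain B where "B > 0" "\<forall>y\<in>a ` {0..1}. norm y \<le> B"
    using compact_imp_bounded bounded_pos by metis
  thus ?thesis by (intro exI[of _ B]) auto
qed

lemma a_lower:
  assumes "\<forall>x\<in>{0<..1}. (a::real\<Rightarrow>real) x > 0"
    and "mono_on {0<..1} (\<lambda>x. x powr \<alpha> / a x)"
  shows "\<exists>c>0. \<forall>x\<in>{0<..1}. c * x powr \<alpha> \<le> a x"
proof (intro exI[of _ "a 1"] conjI ballI)
  show "a 1 > 0" using assms(1) by simp
  fix x :: real assume x: "x \<in> {0<..1}"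
  have "x powr \<alpha> / a x \<le> 1 powr \<alpha> / a 1"
    using mono_onD[OF assms(2), of x 1] x by simp
  hence "x powr \<alpha> / a x \<le> 1 / a 1" by simp
  thus "a 1 * x powr \<alpha> \<le> a x" using assms(1) x by (simp add: field_simps)
qed

lemma sq_split: "(p::real)^2 \<le> 2*q^2 + 2*(p-q)^2"
proof -
  have "0 \<le> (p - 2*q)^2" by simp
  thus ?thesis by (simp add: power2_eq_square algebra_simps)
qed

lemma sq_split2: "((p::real) + q)^2 \<le> 2*p^2 + 2*q^2"
proof -
  have "0 \<le> (p - q)^2" by simp
  thus ?thesis by (simp add: power2_eq_square algebra_simps)
qed

lemma set_meas_sq_div:
  fixes f g :: "'a \<Rightarrow> real"
  assumes "set_borel_measurable M A f" "set_borel_measurable M A g"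
  shows "set_borel_measurable M A (\<lambda>x. (f x)^2 / g x)"
proof -
  have "(\<lambda>x. (indicator A x * f x)^2 / (indicator A x * g x)) \<in> borel_measurable M"
    using assms unfolding set_borel_measurable_def by simp
  also have "(\<lambda>x. (indicator A x * f x)^2 / (indicator A x * g x)) = (\<lambda>x. indicator A x *\<^sub>R ((f x)^2 / g x))"
    by (auto simp: fun_eq_iff indicator_def power2_eq_square)
  finally show ?thesis unfolding set_borel_measurable_def .
qed

lemma set_meas_sq:
  fixes f :: "'a \<Rightarrow> real"
  assumes "set_borel_measurable M A f"
  shows "set_borel_measurable M A (\<lambda>x. (f x)^2)"
proof -
  have "(\<lambda>x. (indicator A x * f x)^2) \<in> borel_measurable M"
    using assms unfolding set_borel_measurable_def by simp
  also have "(\<lambda>x. (indicator A x * f x)^2) = (\<lambda>x. indicator A x *\<^sub>R ((f x)^2))"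
    by (auto simp: fun_eq_iff indicator_def power2_eq_square)
  finally show ?thesis unfolding set_borel_measurable_def .
qed

lemma set_meas_diff:
  fixes f g :: "'a \<Rightarrow> real"
  assumes "set_borel_measurable M A f" "set_borel_measurable M A g"
  shows "set_borel_measurable M A (\<lambda>x. f x - g x)"
proof -
  have "(\<lambda>x. indicator A x * f x - indicator A x * g x) \<in> borel_measurable M"
    using assms unfolding set_borel_measurable_def by simp
  also have "(\<lambda>x. indicator A x * f x - indicator A x * g x) = (\<lambda>x. indicator A x *\<^sub>R (f x - g x))"
    by (auto simp: fun_eq_iff indicator_def)
  finally show ?thesis unfolding set_borel_measurable_def .
qed

lemma a_meas:
  assumes "continuous_on {0..1} (a::real \<Rightarrow> real)"
  shows "set_borel_measurable lborel {0<..<1} a"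
proof -
  have "continuous_on {0<..<1} a" by (rule continuous_on_subset[OF assms]) auto
  hence "(\<lambda>x. indicator {0<..<1} x *\<^sub>R a x) \<in> borel_measurable borel"
    by (intro borel_measurable_continuous_on_indicator) auto
  thus ?thesis by (simp add: set_borel_measurable_def)
qed

lemma set_int_lin:
  fixes f g :: "'a \<Rightarrow> real"
  assumes "set_integrable M A f" "set_integrable M A g"
  shows "set_integrable M A (\<lambda>x. c * f x + d * g x)"
proof -
  have "integrable M (\<lambda>x. c * (indicator A x *\<^sub>R f x) + d * (indicator A x *\<^sub>R g x))"
    using assms unfolding set_integrable_def by (intro Bochner_Integration.integrable_add integrable_mult_right)
  moreover have "(\<lambda>x. indicator A x *\<^sub>R (c * f x + d * g x)) = (\<lambda>x. c * (indicator A x *\<^sub>R f x) + d * (indicator A x *\<^sub>R g x))"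
    by (simp add: fun_eq_iff algebra_simps)
  ultimately show ?thesis unfolding set_integrable_def by simp
qed

lemma set_int_lin_eq:
  fixes f g :: "'a \<Rightarrow> real"
  assumes "set_integrable M A f" "set_integrable M A g"
  shows "(LINT x:A|M. c * f x + d * g x) = c * (LINT x:A|M. f x) + d * (LINT x:A|M. g x)"
proof -
  have eq: "(\<lambda>x. indicator A x *\<^sub>R (c * f x + d * g x)) = (\<lambda>x. c * (indicator A x *\<^sub>R f x) + d * (indicator A x *\<^sub>R g x))"
    by (simp add: fun_eq_iff algebra_simps)
  have i1: "integrable M (\<lambda>x. c * (indicator A x *\<^sub>R f x))" using assms(1) unfolding set_integrable_def by simp
  have i2: "integrable M (\<lambda>x. d * (indicator A x *\<^sub>R g x))" using assms(2) unfolding set_integrable_def by simp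
  show ?thesis unfolding set_lebesgue_integral_def eq
    using Bochner_Integration.integral_add[OF i1 i2] by simp
qed

lemma nL2w_nonneg:
  assumes "\<forall>x\<in>{0<..1}. a x > 0" shows "0 \<le> nL2w a f"
  unfolding nL2w_def
proof (rule set_int_nonneg)
  fix x :: real assume x: "x \<in> {0<..<1}"
  hence "a x > 0" using assms by auto
  thus "0 \<le> (f x)^2 / a x" by simp
qed

lemma meas_section:
  fixes h :: "real \<times> real \<Rightarrow> real"
  assumes "h \<in> borel_measurable lborel"
  shows "(\<lambda>x. h (t, x)) \<in> borel_measurable lborel"
proof -
  have "h \<in> borel_measurable (lborel \<Otimes>\<^sub>M lborel)" using assms by (simp add: lborel_prod)
  thus ?thesis by measurable
qed

lemma L2Q:
  fixes f :: "real \<Rightarrow> real \<Rightarrow> real"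
  assumes M: "\<forall>x\<in>{0..1}. a x \<le> M" and apos: "\<forall>x\<in>{0<..1}. a x > 0"
    and fm: "set_borel_measurable lborel (Qset T) (case_prod f)"
    and fi: "\<forall>t\<in>{0<..<T}. set_integrable lborel {0<..<1} (\<lambda>x. (f t x)^2 / a x)"
    and fb: "\<forall>t\<in>{0<..<T}. nL2w a (f t) \<le> B"
    and T: "T > 0"
  shows "set_integrable lborel (Qset T) (\<lambda>(t,x). (f t x)^2)"
    and "(LINT p:Qset T|lborel. (case p of (t,x) \<Rightarrow> (f t x)^2)) \<le> M * T * B"
proof -
  have ap: "\<And>x. 0 < x \<Longrightarrow> x < 1 \<Longrightarrow> 0 < a x" using apos by auto
  have "a 1 \<le> M" "a 1 > 0" using M apos by auto
  hence M0: "M > 0" by linarith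
  have "T/2 \<in> {0<..<T}" using T by simp
  hence "nL2w a (f (T/2)) \<le> B" using fb by blast
  hence B0: "0 \<le> B" using nL2w_nonneg[OF apos, of "f (T/2)"] by linarith
  define h where "h = (\<lambda>p. indicator (Qset T) p * (case p of (t,x) \<Rightarrow> (f t x)^2))"
  have hm: "h \<in> borel_measurable lborel"
  proof -
    have "(\<lambda>p. indicator (Qset T) p * (case_prod f p)) \<in> borel_measurable lborel"
      using fm by (simp add: set_borel_measurable_def)
    hence "(\<lambda>p. (indicator (Qset T) p * (case_prod f p))^2) \<in> borel_measurable lborel"
      by (rule borel_measurable_power)
    also have "(\<lambda>p. (indicator (Qset T) p * (case_prod f p))^2) = h"
      by (auto simp: h_def indicator_def fun_eq_iff split: prod.splits)
    finally show ?thesis .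
  qed
  have hm2: "h \<in> borel_measurable (lborel \<Otimes>\<^sub>M lborel)" using hm by (simp add: lborel_prod)
  have inner: "(\<integral>\<^sup>+ x. ennreal (h (t, x)) \<partial>lborel) \<le> ennreal (indicator {0<..<T} t * (M * B))" for t
  proof (cases "t \<in> {0<..<T}")
    case False
    hence "\<And>x. h (t,x) = 0" by (auto simp: h_def Qset_def indicator_def)
    thus ?thesis by simp
  next
    case True
    have "(\<integral>\<^sup>+ x. ennreal (h (t, x)) \<partial>lborel) \<le> (\<integral>\<^sup>+ x. ennreal (M * (indicator {0<..<1} x * ((f t x)^2 / a x))) \<partial>lborel)"
    proof (rule nn_integral_mono)
      fix x
      show "ennreal (h (t, x)) \<le> ennreal (M * (indicator {0<..<1} x * ((f t x)^2 / a x)))"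
      proof (cases "x \<in> {0<..<1}")
        case False thus ?thesis by (auto simp: h_def Qset_def indicator_def)
      next
        case xin: True
        have ax: "0 < a x" "a x \<le> M" using apos M xin by auto
        have "(f t x)^2 = a x * ((f t x)^2 / a x)" using ax by simp
        also have "\<dots> \<le> M * ((f t x)^2 / a x)" using ax by (intro mult_right_mono) auto
        finally show ?thesis using True xin by (simp add: h_def Qset_def indicator_def ennreal_leI)
      qed
    qed
    also have "\<dots> = ennreal M * (\<integral>\<^sup>+ x. ennreal (indicator {0<..<1} x * ((f t x)^2 / a x)) \<partial>lborel)"
    proof -
      have mi: "(\<lambda>x. indicator {0<..<1} x * ((f t x)^2 / a x)) \<in> borel_measurable lborel"
      proof -
        have "integrable lborel (\<lambda>x. indicator {0<..<1} x * ((f t x)^2 / a x))"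
          using fi True unfolding set_integrable_def by auto
        thus ?thesis by (rule borel_measurable_integrable)
      qed
      have gnn: "0 \<le> indicator {0<..<1} x * ((f t x)^2 / a x)" for x
        by (auto simp: indicator_def intro!: divide_nonneg_pos ap)
      have "(\<integral>\<^sup>+ x. ennreal (M * (indicator {0<..<1} x * ((f t x)^2 / a x))) \<partial>lborel)
          = (\<integral>\<^sup>+ x. ennreal M * ennreal (indicator {0<..<1} x * ((f t x)^2 / a x)) \<partial>lborel)"
        apply (intro nn_integral_cong ennreal_mult) using M0 gnn by auto
      also have "\<dots> = ennreal M * (\<integral>\<^sup>+ x. ennreal (indicator {0<..<1} x * ((f t x)^2 / a x)) \<partial>lborel)"
        by (rule nn_integral_cmult) (use mi in measurable)
      finally show ?thesis .
    qed
    also have "(\<integral>\<^sup>+ x. ennreal (indicator {0<..<1} x * ((f t x)^2 / a x)) \<partial>lborel) = ennreal (nL2w a (f t))"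
      unfolding nL2w_def set_lebesgue_integral_def real_scaleR_def
      apply (rule nn_integral_eq_integral)
      using fi True apply (simp add: set_integrable_def)
      by (auto simp: indicator_def intro!: divide_nonneg_pos ap)
    also have "ennreal M * ennreal (nL2w a (f t)) \<le> ennreal (M * B)"
    proof -
      have "nL2w a (f t) \<le> B" using fb True by blast
      hence "M * nL2w a (f t) \<le> M * B" using M0 by simp
      thus ?thesis using M0 nL2w_nonneg[OF apos] by (simp add: ennreal_mult[symmetric] ennreal_leI)
    qed
    finally show ?thesis using True by simp
  qed
  have "(\<integral>\<^sup>+ p. ennreal (h p) \<partial>lborel) = (\<integral>\<^sup>+ t. \<integral>\<^sup>+ x. ennreal (h (t, x)) \<partial>lborel \<partial>lborel)"
  proof -
    have "(\<integral>\<^sup>+ t. \<integral>\<^sup>+ x. ennreal (h (t, x)) \<partial>lborel \<partial>lborel) = integral\<^sup>N (lborel \<Otimes>\<^sub>M lborel) (\<lambda>p. ennreal (h p))"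
      by (rule lborel.nn_integral_fst) (use hm2 in measurable)
    thus ?thesis by (simp add: lborel_prod)
  qed
  also have "\<dots> \<le> (\<integral>\<^sup>+ t. ennreal (indicator {0<..<T} t * (M * B)) \<partial>lborel)"
    by (rule nn_integral_mono) (rule inner)
  also have "\<dots> = ennreal (T * (M * B))"
    using T M0 B0 by (simp add: ennreal_mult nn_integral_multc ennreal_indicator)
  finally have fin: "(\<integral>\<^sup>+ p. ennreal (h p) \<partial>lborel) \<le> ennreal (M * T * B)" by (simp add: algebra_simps)
  have hnn: "\<And>p. 0 \<le> h p" by (auto simp: h_def indicator_def split: prod.splits)
  have hi: "integrable lborel h"
    apply (rule integrableI_bounded[OF hm])
    using fin hnn by (simp add: top.not_eq_extremum order_le_less_trans)
  thus "set_integrable lborel (Qset T) (\<lambda>(t,x). (f t x)^2)"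
    by (simp add: set_integrable_def h_def case_prod_beta')
  have "(LINT p:Qset T|lborel. (case p of (t,x) \<Rightarrow> (f t x)^2)) = integral\<^sup>L lborel h"
    by (simp add: set_lebesgue_integral_def h_def)
  also have "\<dots> = enn2real (\<integral>\<^sup>+ p. ennreal (h p) \<partial>lborel)"
    by (rule integral_eq_nn_integral) (use hm hnn in auto)
  also have "\<dots> \<le> M * T * B"
    using fin M0 T B0 by (simp add: enn2real_leI)
  finally show "(LINT p:Qset T|lborel. (case p of (t,x) \<Rightarrow> (f t x)^2)) \<le> M * T * B" .
qed

lemma indQ: "x \<in> {0<..<1} \<Longrightarrow> indicator (Qset T) (\<sigma>,x) = (indicator {0<..<T} \<sigma> :: real)"
  by (simp add: Qset_def indicator_def)

lemma P_props:
  fixes a :: "real \<Rightarrow> real" and ut :: "real \<Rightarrow> real \<Rightarrow> real" and \<xi> :: "real \<Rightarrow> real"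
    and P :: "real \<Rightarrow> real \<Rightarrow> real"
  assumes apos: "\<forall>x\<in>{0<..1}. a x > 0" and T: "T > 0"
    and utm: "set_borel_measurable lborel (Qset T) (case_prod ut)"
    and ut2: "set_integrable lborel (Qset T) (\<lambda>(t,x). (ut t x)^2 / a x)"
    and xi: "L2w a \<xi>" and M: "\<forall>x\<in>{0..1}. a x \<le> M" and acont: "continuous_on {0..1} a"
    and P_def: "P = (\<lambda>t x. \<xi> x + (LINT s:{0<..<t}|lborel. ut s x))"
    and Ktot_def: "Ktot = (LINT p:Qset T|lborel. (case p of (t,x) \<Rightarrow> (ut t x)^2 / a x))"
  shows "\<forall>t\<in>{0..T}. L2w a (P t)"
    and "\<forall>t\<in>{0..T}. \<forall>s\<in>{0..T}. nL2w a (\<lambda>x. P t x - P s x) \<le> \<bar>t - s\<bar> * Ktot"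
    and "set_borel_measurable lborel (Qset T) (case_prod P)"
    and "0 \<le> Ktot"
proof -
  have ap: "\<And>x. 0 < x \<Longrightarrow> x < 1 \<Longrightarrow> 0 < a x" using apos by auto
  define U where "U = (\<lambda>p. indicator (Qset T) p * case_prod ut p)"
  have Um[measurable]: "U \<in> borel_measurable (lborel \<Otimes>\<^sub>M lborel)"
    using utm by (simp add: U_def set_borel_measurable_def lborel_prod)
  define F where "F = (\<lambda>p::real\<times>real. indicator (Qset T) p * (case p of (t,x) \<Rightarrow> (ut t x)^2 / a x))"
  have Fi: "integrable (lborel \<Otimes>\<^sub>M lborel) F"
    using ut2 by (simp add: F_def set_integrable_def lborel_prod case_prod_beta')
  have Fi': "integrable (lborel \<Otimes>\<^sub>M lborel) (\<lambda>(\<sigma>,x). F (\<sigma>,x))"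
    using Fi by (simp add: case_prod_beta')
  define K where "K = (\<lambda>x. LBINT \<sigma>. F (\<sigma>,x))"
  have Kint: "integrable lborel K"
    unfolding K_def by (rule lborel_pair.integrable_snd[OF Fi'])
  have Ktot_eq: "Ktot = (LBINT x. K x)"
  proof -
    have "Ktot = integral\<^sup>L (lborel \<Otimes>\<^sub>M lborel) F"
      by (simp add: Ktot_def F_def set_lebesgue_integral_def lborel_prod case_prod_beta')
    also have "\<dots> = (LBINT x. K x)"
      using lborel_pair.integral_snd[OF Fi'] by (simp add: K_def case_prod_beta')
    finally show ?thesis .
  qed
  have AEsec: "AE x in lborel. integrable lborel (\<lambda>\<sigma>. F (\<sigma>,x))"
    using lborel_pair.AE_integrable_snd[OF Fi'] by simp
  have Fnn: "0 \<le> F p" for p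
  proof (cases "p \<in> Qset T")
    case True
    then obtain \<sigma> x where p: "p = (\<sigma>,x)" "x \<in> {0<..<1}" by (auto simp: Qset_def)
    hence "a x > 0" using ap by auto
    thus ?thesis using True p by (simp add: F_def)
  next
    case False thus ?thesis by (simp add: F_def)
  qed
  have Knn: "0 \<le> K x" for x unfolding K_def by (rule integral_nonneg_AE) (simp add: Fnn)
  show "0 \<le> Ktot" unfolding Ktot_eq by (rule integral_nonneg_AE) (simp add: Knn)

  have ptw: "(P t x - P s x)^2 / a x \<le> \<bar>t - s\<bar> * K x"
    if x: "x \<in> {0<..<1}" and xi: "integrable lborel (\<lambda>\<sigma>. F (\<sigma>,x))"
      and ts: "t \<in> {0..T}" "s \<in> {0..T}" for x t s
  proof -
    have ax: "a x > 0" using x ap by auto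
    have gm: "set_borel_measurable lborel {0<..<T} (\<lambda>\<sigma>. ut \<sigma> x)"
    proof -
      have "(\<lambda>\<sigma>. U (\<sigma>,x)) \<in> borel_measurable lborel" by measurable
      also have "(\<lambda>\<sigma>. U (\<sigma>,x)) = (\<lambda>\<sigma>. indicator {0<..<T} \<sigma> *\<^sub>R ut \<sigma> x)"
        using x by (simp add: U_def indQ fun_eq_iff)
      finally show ?thesis by (simp add: set_borel_measurable_def)
    qed
    have Feq: "(\<lambda>\<sigma>. F (\<sigma>,x)) = (\<lambda>\<sigma>. indicator {0<..<T} \<sigma> * ((ut \<sigma> x)^2 / a x))"
      using x by (simp add: F_def indQ fun_eq_iff)
    have g2': "set_integrable lborel {0<..<T} (\<lambda>\<sigma>. (ut \<sigma> x)^2 / a x)"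
      using xi unfolding Feq set_integrable_def by simp
    have g2: "set_integrable lborel {0<..<T} (\<lambda>\<sigma>. (ut \<sigma> x)^2)"
      using g2' ax set_integrable_mult_divide_iff[of "a x" lborel "{0<..<T}" "\<lambda>\<sigma>. (ut \<sigma> x)^2"] by simp
    have Kx: "K x = (LINT \<sigma>:{0<..<T}|lborel. (ut \<sigma> x)^2) / a x"
    proof -
      have "(\<lambda>\<sigma>. indicator {0<..<T} \<sigma> * ((ut \<sigma> x)^2 / a x)) = (\<lambda>\<sigma>. (indicator {0<..<T} \<sigma> * (ut \<sigma> x)^2) / a x)"
        by (simp add: fun_eq_iff)
      thus ?thesis unfolding K_def Feq set_lebesgue_integral_def real_scaleR_def
        by (simp only: integral_divide_zero)
    qed
    have "(P t x - P s x)^2 = ((LINT \<sigma>:{0<..<t}|lborel. ut \<sigma> x) - (LINT \<sigma>:{0<..<s}|lborel. ut \<sigma> x))^2"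
      by (simp add: P_def)
    also have "\<dots> \<le> \<bar>t - s\<bar> * (LINT \<sigma>:{0<..<T}|lborel. (ut \<sigma> x)^2)"
    proof (cases "s \<le> t")
      case True thus ?thesis using prim_holderL[OF gm g2, of s t] ts by simp
    next
      case False thus ?thesis using prim_holderL[OF gm g2, of t s] ts by (simp add: power2_commute)
    qed
    finally have "(P t x - P s x)^2 \<le> \<bar>t - s\<bar> * (LINT \<sigma>:{0<..<T}|lborel. (ut \<sigma> x)^2)" .
    hence "(P t x - P s x)^2 / a x \<le> \<bar>t - s\<bar> * (LINT \<sigma>:{0<..<T}|lborel. (ut \<sigma> x)^2) / a x"
      using ax by (simp add: divide_right_mono)
    thus ?thesis using Kx by simp
  qed
  have AEgood: "AE x in lborel. x \<in> {0<..<1} \<longrightarrow> (\<forall>t\<in>{0..T}. \<forall>s\<in>{0..T}. (P t x - P s x)^2 / a x \<le> \<bar>t - s\<bar> * K x)"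
    using AEsec by eventually_elim (use ptw in blast)
  have P0: "P 0 x = \<xi> x" for x by (simp add: P_def set_lebesgue_integral_def)
  have Qsets: "Qset T \<in> sets (lborel \<Otimes>\<^sub>M lborel)"
    by (simp add: Qset_def lborel_prod[symmetric])
  have xim: "(\<lambda>x. indicator {0<..<1} x * \<xi> x) \<in> borel_measurable lborel"
    using xi by (simp add: L2w_def set_borel_measurable_def)
  have Pm: "set_borel_measurable lborel {0<..<1} (P t)" if t: "t \<in> {0..T}" for t
  proof -
    have m1: "(\<lambda>x. LBINT \<sigma>. indicator {0<..<t} \<sigma> * U (\<sigma>,x)) \<in> borel_measurable lborel"
      by (rule lborel.borel_measurable_lebesgue_integral) measurable
    have eq: "indicator {0<..<1} x *\<^sub>R P t x = indicator {0<..<1} x * \<xi> x + indicator {0<..<1} x * (LBINT \<sigma>. indicator {0<..<t} \<sigma> * U (\<sigma>,x))" for x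
    proof (cases "x \<in> {0<..<1}")
      case True
      have "(\<lambda>\<sigma>. indicator {0<..<t} \<sigma> * U (\<sigma>,x)) = (\<lambda>\<sigma>. indicator {0<..<t} \<sigma> *\<^sub>R ut \<sigma> x)"
      proof (rule ext)
        fix \<sigma>
        show "indicator {0<..<t} \<sigma> * U (\<sigma>,x) = indicator {0<..<t} \<sigma> *\<^sub>R ut \<sigma> x"
        proof (cases "\<sigma> \<in> {0<..<t}")
          case True2: True
          hence "(\<sigma>,x) \<in> Qset T" using True t by (auto simp: Qset_def)
          thus ?thesis using True2 by (simp add: U_def)
        qed simp
      qed
      thus ?thesis using True by (simp add: P_def set_lebesgue_integral_def algebra_simps)
    next
      case False thus ?thesis by simp
    qed
    have "(\<lambda>x. indicator {0<..<1} x * \<xi> x + indicator {0<..<1} x * (LBINT \<sigma>. indicator {0<..<t} \<sigma> * U (\<sigma>,x))) \<in> borel_measurable lborel"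
      using xim m1 by measurable
    thus ?thesis unfolding set_borel_measurable_def eq .
  qed
  have am: "set_borel_measurable lborel {0<..<1} a" by (rule a_meas[OF acont])
  have Kint01: "set_integrable lborel {0<..<1} K"
    unfolding set_integrable_def by (rule integrable_mult_indicator[OF _ Kint]) simp
  have xi2a: "set_integrable lborel {0<..<1} (\<lambda>x. (\<xi> x)^2 / a x)" using xi by (simp add: L2w_def)
  have M0: "M > 0" using M apos by (metis atLeastAtMost_iff greaterThanAtMost_iff order_less_le_trans order_refl zero_le_one zero_less_one)
  show "\<forall>t\<in>{0..T}. L2w a (P t)"
  proof
    fix t assume t: "t \<in> {0..T}"
    have bnd: "AE x in lborel. x \<in> {0<..<1} \<longrightarrow> (P t x)^2 / a x \<le> 2 * ((\<xi> x)^2 / a x) + 2 * T * K x"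
      using AEgood
    proof eventually_elim
      case (elim x)
      show ?case
      proof
        assume x: "x \<in> {0<..<1}"
        have ax: "a x > 0" using x ap by auto
        have h0: "(0::real) \<in> {0..T}" using T by simp
        have "(P t x - P 0 x)^2 / a x \<le> \<bar>t - 0\<bar> * K x" using elim x t h0 by blast
        also have "\<dots> \<le> T * K x" using t Knn[of x] by (simp add: mult_right_mono)
        finally have d: "(P t x - \<xi> x)^2 / a x \<le> T * K x" by (simp add: P0)
        have "(P t x)^2 / a x \<le> (2*(\<xi> x)^2 + 2*(P t x - \<xi> x)^2) / a x"
          using ax sq_split[of "P t x" "\<xi> x"] by (simp add: divide_right_mono)
        also have "\<dots> = 2*((\<xi> x)^2 / a x) + 2*((P t x - \<xi> x)^2 / a x)"
          by (simp add: add_divide_distrib)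
        also have "\<dots> \<le> 2 * ((\<xi> x)^2 / a x) + 2 * T * K x" using d by simp
        finally show "(P t x)^2 / a x \<le> 2 * ((\<xi> x)^2 / a x) + 2 * T * K x" .
      qed
    qed
    have ub: "set_integrable lborel {0<..<1} (\<lambda>x. 2 * ((\<xi> x)^2 / a x) + 2 * T * K x)"
      using set_int_lin[OF xi2a Kint01, of 2 "2*T"] by simp
    have Ptm: "set_borel_measurable lborel {0<..<1} (P t)" by (rule Pm[OF t])
    have i1: "set_integrable lborel {0<..<1} (\<lambda>x. (P t x)^2 / a x)"
    proof (rule set_integrable_bound[OF ub set_meas_sq_div[OF Ptm am]])
      show "AE x\<in>{0<..<1} in lborel. norm ((P t x)^2 / a x) \<le> norm (2 * ((\<xi> x)^2 / a x) + 2 * T * K x)"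
        using bnd
      proof eventually_elim
        case (elim x)
        show ?case
        proof
          assume x: "x \<in> {0<..<1}"
          have ax: "a x > 0" using x ap by auto
          have "0 \<le> (P t x)^2 / a x" using ax by simp
          thus "norm ((P t x)^2 / a x) \<le> norm (2 * ((\<xi> x)^2 / a x) + 2 * T * K x)"
            using elim x by simp
        qed
      qed
    qed
    have i2: "set_integrable lborel {0<..<1} (\<lambda>x. (P t x)^2)"
    proof (rule set_integrable_bound[OF _ set_meas_sq[OF Ptm]])
      show "set_integrable lborel {0<..<1} (\<lambda>x. M * ((P t x)^2 / a x))"
        by (rule set_integrable_mult_right, rule i1)
      show "AE x\<in>{0<..<1} in lborel. norm ((P t x)^2) \<le> norm (M * ((P t x)^2 / a x))"
      proof (rule AE_I2, rule impI)
        fix x :: real assume x: "x \<in> {0<..<1}"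
        have ax: "a x > 0" "a x \<le> M" using x ap M by auto
        have "(P t x)^2 = a x * ((P t x)^2 / a x)" using ax by simp
        also have "\<dots> \<le> M * ((P t x)^2 / a x)" using ax by (intro mult_right_mono) auto
        finally show "norm ((P t x)^2) \<le> norm (M * ((P t x)^2 / a x))" using ax M0 by simp
      qed
    qed
    show "L2w a (P t)" unfolding L2w_def using Ptm i1 i2 by simp
  qed
  show "\<forall>t\<in>{0..T}. \<forall>s\<in>{0..T}. nL2w a (\<lambda>x. P t x - P s x) \<le> \<bar>t - s\<bar> * Ktot"
  proof (intro ballI)
    fix t s assume ts: "t \<in> {0..T}" "s \<in> {0..T}"
    have "nL2w a (\<lambda>x. P t x - P s x) = (LBINT x. indicator {0<..<1} x * ((P t x - P s x)^2 / a x))"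
      by (simp add: nL2w_def set_lebesgue_integral_def)
    also have "\<dots> \<le> (LBINT x. \<bar>t - s\<bar> * K x)"
    proof (rule integral_mono_AE')
      show "integrable lborel (\<lambda>x. \<bar>t - s\<bar> * K x)" using Kint by simp
      show "AE x in lborel. 0 \<le> \<bar>t - s\<bar> * K x" using Knn by simp
      show "AE x in lborel. indicator {0<..<1} x * ((P t x - P s x)^2 / a x) \<le> \<bar>t - s\<bar> * K x"
        using AEgood
      proof eventually_elim
        case (elim x)
        show ?case
        proof (cases "x \<in> {0<..<1}")
          case True thus ?thesis using elim ts by simp
        next
          case False thus ?thesis using Knn[of x] by simp
        qed
      qed
    qed
    also have "\<dots> = \<bar>t - s\<bar> * Ktot" by (simp add: Ktot_eq)
    finally show "nL2w a (\<lambda>x. P t x - P s x) \<le> \<bar>t - s\<bar> * Ktot" .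
  qed
  show "set_borel_measurable lborel (Qset T) (case_prod P)"
  proof -
    have H: "(\<lambda>p::real\<times>real. LBINT \<sigma>. (if 0 < \<sigma> \<and> \<sigma> < fst p then U (\<sigma>, snd p) else 0)) \<in> borel_measurable (lborel \<Otimes>\<^sub>M lborel)"
      by (rule lborel.borel_measurable_lebesgue_integral) measurable
    have X: "(\<lambda>p::real\<times>real. indicator {0<..<1} (snd p) * \<xi> (snd p)) \<in> borel_measurable (lborel \<Otimes>\<^sub>M lborel)"
      using xim by measurable
    have eq: "indicator (Qset T) p *\<^sub>R case_prod P p = indicator (Qset T) p * (indicator {0<..<1} (snd p) * \<xi> (snd p))
        + indicator (Qset T) p * (LBINT \<sigma>. (if 0 < \<sigma> \<and> \<sigma> < fst p then U (\<sigma>, snd p) else 0))" for p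
    proof (cases "p \<in> Qset T")
      case True
      then obtain t x where p: "p = (t,x)" "t \<in> {0<..<T}" "x \<in> {0<..<1}" by (auto simp: Qset_def)
      have "(\<lambda>\<sigma>. (if 0 < \<sigma> \<and> \<sigma> < t then U (\<sigma>, x) else 0)) = (\<lambda>\<sigma>. indicator {0<..<t} \<sigma> *\<^sub>R ut \<sigma> x)"
      proof (rule ext)
        fix \<sigma>
        show "(if 0 < \<sigma> \<and> \<sigma> < t then U (\<sigma>, x) else 0) = indicator {0<..<t} \<sigma> *\<^sub>R ut \<sigma> x"
        proof (cases "0 < \<sigma> \<and> \<sigma> < t")
          case True2: True
          hence "(\<sigma>,x) \<in> Qset T" using p by (auto simp: Qset_def)
          thus ?thesis using True2 by (simp add: U_def)
        qed auto
      qed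
      thus ?thesis using True p(2,3) unfolding p(1) by (simp add: P_def set_lebesgue_integral_def algebra_simps cong: if_cong)
    next
      case False thus ?thesis by simp
    qed
    have "(\<lambda>p. indicator (Qset T) p * (indicator {0<..<1} (snd p) * \<xi> (snd p))
        + indicator (Qset T) p * (LBINT \<sigma>. (if 0 < \<sigma> \<and> \<sigma> < fst p then U (\<sigma>, snd p) else 0))) \<in> borel_measurable (lborel \<Otimes>\<^sub>M lborel)"
      using H X Qsets by measurable
    hence "(\<lambda>p. indicator (Qset T) p *\<^sub>R case_prod P p) \<in> borel_measurable (lborel \<Otimes>\<^sub>M lborel)"
      unfolding eq .
    thus ?thesis by (simp add: set_borel_measurable_def lborel_prod)
  qed
qed

lemma N_sum:
  fixes f g :: "real \<Rightarrow> real"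
  assumes apos: "\<forall>x\<in>{0<..1}. a x > 0"
    and fm: "set_borel_measurable lborel {0<..<1} f" and gm: "set_borel_measurable lborel {0<..<1} g"
    and fi: "set_integrable lborel {0<..<1} (\<lambda>x. (f x)^2 / a x)"
    and gi: "set_integrable lborel {0<..<1} (\<lambda>x. (g x)^2 / a x)"
    and am: "set_borel_measurable lborel {0<..<1} a"
  shows "set_integrable lborel {0<..<1} (\<lambda>x. (f x + g x)^2 / a x)"
    and "nL2w a (\<lambda>x. f x + g x) \<le> 2 * nL2w a f + 2 * nL2w a g"
proof -
  have ap: "\<And>x. x \<in> {0<..<1} \<Longrightarrow> 0 < a x" using apos by auto
  have sm: "set_borel_measurable lborel {0<..<1} (\<lambda>x. f x + g x)"
  proof -
    have "(\<lambda>x. indicator {0<..<1} x * f x + indicator {0<..<1} x * g x) \<in> borel_measurable lborel"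
      using fm gm unfolding set_borel_measurable_def by simp
    also have "(\<lambda>x. indicator {0<..<1} x * f x + indicator {0<..<1} x * g x) = (\<lambda>x. indicator {0<..<1} x *\<^sub>R (f x + g x))"
      by (simp add: fun_eq_iff algebra_simps)
    finally show ?thesis unfolding set_borel_measurable_def .
  qed
  have ub: "set_integrable lborel {0<..<1} (\<lambda>x. 2 * ((f x)^2 / a x) + 2 * ((g x)^2 / a x))"
    by (rule set_int_lin[OF fi gi])
  have pt: "(f x + g x)^2 / a x \<le> 2 * ((f x)^2 / a x) + 2 * ((g x)^2 / a x)" if x: "x \<in> {0<..<1}" for x
  proof -
    have ax: "a x > 0" using ap x by auto
    have "(f x + g x)^2 / a x \<le> (2*(f x)^2 + 2*(g x)^2) / a x"
      using ax sq_split2[of "f x" "g x"] by (simp add: divide_right_mono)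
    thus ?thesis by (simp add: add_divide_distrib)
  qed
  show si: "set_integrable lborel {0<..<1} (\<lambda>x. (f x + g x)^2 / a x)"
  proof (rule set_integrable_bound[OF ub set_meas_sq_div[OF sm am]])
    show "AE x\<in>{0<..<1} in lborel. norm ((f x + g x)^2 / a x) \<le> norm (2 * ((f x)^2 / a x) + 2 * ((g x)^2 / a x))"
    proof (rule AE_I2, rule impI)
      fix x :: real assume x: "x \<in> {0<..<1}"
      have ax: "a x > 0" using ap x by auto
      have "0 \<le> (f x + g x)^2 / a x" using ax by simp
      thus "norm ((f x + g x)^2 / a x) \<le> norm (2 * ((f x)^2 / a x) + 2 * ((g x)^2 / a x))"
        using pt[OF x] by simp
    qed
  qed
  have "nL2w a (\<lambda>x. f x + g x) \<le> (LINT x:{0<..<1}|lborel. 2 * ((f x)^2 / a x) + 2 * ((g x)^2 / a x))"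
    unfolding nL2w_def by (rule set_integral_mono[OF si ub pt])
  also have "\<dots> = 2 * nL2w a f + 2 * nL2w a g"
    unfolding nL2w_def by (rule set_int_lin_eq[OF fi gi])
  finally show "nL2w a (\<lambda>x. f x + g x) \<le> 2 * nL2w a f + 2 * nL2w a g" .
qed

lemma N_diff:
  fixes f g :: "real \<Rightarrow> real"
  assumes apos: "\<forall>x\<in>{0<..1}. a x > 0"
    and fm: "set_borel_measurable lborel {0<..<1} f" and gm: "set_borel_measurable lborel {0<..<1} g"
    and fi: "set_integrable lborel {0<..<1} (\<lambda>x. (f x)^2 / a x)"
    and gi: "set_integrable lborel {0<..<1} (\<lambda>x. (g x)^2 / a x)"
    and am: "set_borel_measurable lborel {0<..<1} a"
  shows "set_integrable lborel {0<..<1} (\<lambda>x. (f x - g x)^2 / a x)"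
    and "nL2w a (\<lambda>x. f x - g x) \<le> 2 * nL2w a f + 2 * nL2w a g"
proof -
  have gm': "set_borel_measurable lborel {0<..<1} (\<lambda>x. - g x)"
  proof -
    have "(\<lambda>x. - (indicator {0<..<1} x *\<^sub>R g x)) \<in> borel_measurable lborel"
      using gm unfolding set_borel_measurable_def by (rule borel_measurable_uminus)
    thus ?thesis unfolding set_borel_measurable_def by simp
  qed
  have gi': "set_integrable lborel {0<..<1} (\<lambda>x. (- g x)^2 / a x)" using gi by simp
  have ng: "nL2w a (\<lambda>x. - g x) = nL2w a g" by (simp add: nL2w_def)
  show "set_integrable lborel {0<..<1} (\<lambda>x. (f x - g x)^2 / a x)"
    using N_sum(1)[OF apos fm gm' fi gi' am] by simp
  show "nL2w a (\<lambda>x. f x - g x) \<le> 2 * nL2w a f + 2 * nL2w a g"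
    using N_sum(2)[OF apos fm gm' fi gi' am] ng by simp
qed

lemma L2w_diff:
  assumes apos: "\<forall>x\<in>{0<..1}. a x > 0" and am: "set_borel_measurable lborel {0<..<1} a"
    and M: "\<forall>x\<in>{0..1}. a x \<le> M"
    and f: "L2w a f" and g: "L2w a g"
  shows "L2w a (\<lambda>x. f x - g x)"
proof -
  have fm: "set_borel_measurable lborel {0<..<1} f" and fi: "set_integrable lborel {0<..<1} (\<lambda>x. (f x)^2 / a x)"
    using f by (auto simp: L2w_def)
  have gm: "set_borel_measurable lborel {0<..<1} g" and gi: "set_integrable lborel {0<..<1} (\<lambda>x. (g x)^2 / a x)"
    using g by (auto simp: L2w_def)
  have dm: "set_borel_measurable lborel {0<..<1} (\<lambda>x. f x - g x)" by (rule set_meas_diff[OF fm gm])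
  have di: "set_integrable lborel {0<..<1} (\<lambda>x. (f x - g x)^2 / a x)" by (rule N_diff(1)[OF apos fm gm fi gi am])
  have "a 1 \<le> M" "a 1 > 0" using M apos by auto
  hence M0: "M > 0" by linarith
  have d2: "set_integrable lborel {0<..<1} (\<lambda>x. (f x - g x)^2)"
  proof (rule set_integrable_bound[OF _ set_meas_sq[OF dm]])
    show "set_integrable lborel {0<..<1} (\<lambda>x. M * ((f x - g x)^2 / a x))"
      by (rule set_integrable_mult_right, rule di)
    show "AE x\<in>{0<..<1} in lborel. norm ((f x - g x)^2) \<le> norm (M * ((f x - g x)^2 / a x))"
    proof (rule AE_I2, rule impI)
      fix x :: real assume x: "x \<in> {0<..<1}"
      have ax: "a x > 0" "a x \<le> M" using x apos M by auto
      have "(f x - g x)^2 = a x * ((f x - g x)^2 / a x)" using ax by simp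
      also have "\<dots> \<le> M * ((f x - g x)^2 / a x)" using ax by (intro mult_right_mono) auto
      finally show "norm ((f x - g x)^2) \<le> norm (M * ((f x - g x)^2 / a x))" using ax M0 by simp
    qed
  qed
  show ?thesis unfolding L2w_def using dm di d2 by simp
qed

lemma cont_from_lip:
  assumes lip: "\<forall>t\<in>{0..T}. \<forall>s\<in>{0..T}. nL2w a (\<lambda>x. P t x - P s x) \<le> \<bar>t - s\<bar> * K"
    and apos: "\<forall>x\<in>{0<..1}. a x > 0"
  shows "\<forall>t0\<in>{0..T}. ((\<lambda>t. nL2w a (\<lambda>x. P t x - P t0 x)) \<longlongrightarrow> 0) (at t0 within {0..T})"
proof
  fix t0 assume t0: "t0 \<in> {0..T}"
  show "((\<lambda>t. nL2w a (\<lambda>x. P t x - P t0 x)) \<longlongrightarrow> 0) (at t0 within {0..T})"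
  proof (rule tendsto_sandwich[of "\<lambda>t. 0" _ _ "\<lambda>t. \<bar>t - t0\<bar> * K"])
    show "\<forall>\<^sub>F t in at t0 within {0..T}. 0 \<le> nL2w a (\<lambda>x. P t x - P t0 x)"
      using nL2w_nonneg[OF apos] by simp
    show "\<forall>\<^sub>F t in at t0 within {0..T}. nL2w a (\<lambda>x. P t x - P t0 x) \<le> \<bar>t - t0\<bar> * K"
      unfolding eventually_at_filter using lip t0 by (auto intro!: always_eventually)
    show "((\<lambda>t. 0::real) \<longlongrightarrow> 0) (at t0 within {0..T})" by simp
    have "((\<lambda>t. \<bar>t - t0\<bar> * K) \<longlongrightarrow> \<bar>t0 - t0\<bar> * K) (at t0 within {0..T})"
      by (intro tendsto_intros)
    thus "((\<lambda>t. \<bar>t - t0\<bar> * K) \<longlongrightarrow> 0) (at t0 within {0..T})" by simp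
  qed
qed

lemma X_facts:
  assumes acont: "continuous_on {0..1} a" and apos: "\<forall>x\<in>{0<..1}. a x > 0"
    and M: "\<forall>x\<in>{0..1}. a x \<le> M" and T: "T > 0"
    and X: "inX a T u ut ux uxx"
  shows "\<exists>P. (\<forall>t\<in>{0..T}. L2w a (P t))
     \<and> (\<forall>t\<in>{0..T}. \<forall>s\<in>{0..T}. nL2w a (\<lambda>x. P t x - P s x) \<le> \<bar>t - s\<bar> * (LINT p:Qset T|lborel. (case p of (t,x) \<Rightarrow> (ut t x)^2 / a x)))
     \<and> set_borel_measurable lborel (Qset T) (case_prod P)
     \<and> set_integrable lborel (Qset T) (\<lambda>(t,x). (P t x)^2)
     \<and> (AE p in lborel. p \<in> Qset T \<longrightarrow> u (fst p) (snd p) = P (fst p) (snd p))"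
proof -
  have utm: "set_borel_measurable lborel (Qset T) (case_prod ut)"
    and ut2: "set_integrable lborel (Qset T) (\<lambda>(t,x). (ut t x)^2 / a x)"
    using X by (auto simp: inX_def)
  obtain \<xi> where xi: "L2w a \<xi>" and AEu: "AE p in lborel. p \<in> Qset T \<longrightarrow>
          u (fst p) (snd p) = \<xi> (snd p) + (LINT s:{0<..<fst p}|lborel. ut s (snd p))"
    using X by (auto simp: inX_def)
  define P where "P = (\<lambda>t x. \<xi> x + (LINT s:{0<..<t}|lborel. ut s x))"
  define Ktot where "Ktot = (LINT p:Qset T|lborel. (case p of (t,x) \<Rightarrow> (ut t x)^2 / a x))"
  note PP = P_props[OF apos T utm ut2 xi M acont P_def Ktot_def]
  have am: "set_borel_measurable lborel {0<..<1} a" by (rule a_meas[OF acont])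
  have P0: "P 0 = \<xi>" by (simp add: P_def set_lebesgue_integral_def fun_eq_iff)
  have T0: "(0::real) \<in> {0..T}" using T by simp
  have bnd: "\<forall>t\<in>{0<..<T}. nL2w a (P t) \<le> 2 * nL2w a \<xi> + 2 * (T * Ktot)"
  proof
    fix t assume t: "t \<in> {0<..<T}"
    hence t': "t \<in> {0..T}" by simp
    have Lt: "L2w a (P t)" using PP(1) t' by blast
    have Ld: "L2w a (\<lambda>x. P t x - P 0 x)" by (rule L2w_diff[OF apos am M Lt PP(1)[rule_format, OF T0]])
    have "nL2w a (P t) = nL2w a (\<lambda>x. P 0 x + (P t x - P 0 x))" by simp
    also have "\<dots> \<le> 2 * nL2w a (P 0) + 2 * nL2w a (\<lambda>x. P t x - P 0 x)"
      apply (rule N_sum(2)[OF apos _ _ _ _ am])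
      using PP(1)[rule_format, OF T0] Ld by (auto simp: L2w_def)
    also have "nL2w a (\<lambda>x. P t x - P 0 x) \<le> T * Ktot"
    proof -
      have "nL2w a (\<lambda>x. P t x - P 0 x) \<le> \<bar>t - 0\<bar> * Ktot" using PP(2) t' T0 unfolding Ktot_def by blast
      also have "\<dots> \<le> T * Ktot" using t PP(4) by (simp add: mult_right_mono)
      finally show ?thesis .
    qed
    finally show "nL2w a (P t) \<le> 2 * nL2w a \<xi> + 2 * (T * Ktot)" using P0 by simp
  qed
  have fi: "\<forall>t\<in>{0<..<T}. set_integrable lborel {0<..<1} (\<lambda>x. (P t x)^2 / a x)"
    using PP(1) by (auto simp: L2w_def)
  have sq: "set_integrable lborel (Qset T) (\<lambda>(t,x). (P t x)^2)"
    by (rule L2Q(1)[OF M apos PP(3) fi bnd T])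
  show ?thesis
    apply (rule exI[of _ P])
    using PP(1,2,3) sq AEu unfolding Ktot_def by (simp add: P_def)
qed

lemma part1:
  assumes acont: "continuous_on {0..1} a" and apos: "\<forall>x\<in>{0<..1}. a x > 0"
    and T: "T > 0"
    and X: "inX a T u ut ux uxx"
  shows "\<exists>v. inY a T v \<and> (AE p in lborel. p \<in> Qset T \<longrightarrow> u (fst p) (snd p) = v (fst p) (snd p))"
proof -
  obtain M where M: "\<forall>x\<in>{0..1}. a x \<le> M" using a_upper[OF acont] by blast
  obtain P where P1: "\<forall>t\<in>{0..T}. L2w a (P t)"
    and P2: "\<forall>t\<in>{0..T}. \<forall>s\<in>{0..T}. nL2w a (\<lambda>x. P t x - P s x) \<le> \<bar>t - s\<bar> * (LINT p:Qset T|lborel. (case p of (t,x) \<Rightarrow> (ut t x)^2 / a x))"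
    and P3: "set_borel_measurable lborel (Qset T) (case_prod P)"
    and P4: "set_integrable lborel (Qset T) (\<lambda>(t,x). (P t x)^2)"
    and P5: "AE p in lborel. p \<in> Qset T \<longrightarrow> u (fst p) (snd p) = P (fst p) (snd p)"
    using X_facts[OF acont apos M T X] by blast
  have "inY a T P" unfolding inY_def using P1 cont_from_lip[OF P2 apos] P3 P4 by blast
  thus ?thesis using P5 by blast
qed

lemma L2w_of:
  assumes apos: "\<forall>x\<in>{0<..1}. a x > 0" and M: "\<forall>x\<in>{0..1}. a x \<le> M"
    and fm: "set_borel_measurable lborel {0<..<1} f"
    and fi: "set_integrable lborel {0<..<1} (\<lambda>x. (f x)^2 / a x)"
  shows "L2w a f"
proof -
  have "a 1 \<le> M" "a 1 > 0" using M apos by auto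
  hence M0: "M > 0" by linarith
  have d2: "set_integrable lborel {0<..<1} (\<lambda>x. (f x)^2)"
  proof (rule set_integrable_bound[OF _ set_meas_sq[OF fm]])
    show "set_integrable lborel {0<..<1} (\<lambda>x. M * ((f x)^2 / a x))"
      by (rule set_integrable_mult_right, rule fi)
    show "AE x\<in>{0<..<1} in lborel. norm ((f x)^2) \<le> norm (M * ((f x)^2 / a x))"
    proof (rule AE_I2, rule impI)
      fix x :: real assume x: "x \<in> {0<..<1}"
      have ax: "a x > 0" "a x \<le> M" using x apos M by auto
      have "(f x)^2 = a x * ((f x)^2 / a x)" using ax by simp
      also have "\<dots> \<le> M * ((f x)^2 / a x)" using ax by (intro mult_right_mono) auto
      finally show "norm ((f x)^2) \<le> norm (M * ((f x)^2 / a x))" using ax M0 by simp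
    qed
  qed
  show ?thesis unfolding L2w_def using fm fi d2 by simp
qed

lemma N_cong_AE:
  assumes fm: "set_borel_measurable lborel {0<..<1} f" and gm: "set_borel_measurable lborel {0<..<1} g"
    and am: "set_borel_measurable lborel {0<..<1} a"
    and ae: "AE x in lborel. x \<in> {0<..<1} \<longrightarrow> f x = g x"
  shows "nL2w a f = nL2w a g"
proof -
  have m1: "(\<lambda>x. indicator {0<..<1} x *\<^sub>R ((f x)^2 / a x)) \<in> borel_measurable lborel"
    using set_meas_sq_div[OF fm am] by (simp add: set_borel_measurable_def)
  have m2: "(\<lambda>x. indicator {0<..<1} x *\<^sub>R ((g x)^2 / a x)) \<in> borel_measurable lborel"
    using set_meas_sq_div[OF gm am] by (simp add: set_borel_measurable_def)
  show ?thesis unfolding nL2w_def set_lebesgue_integral_def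
    by (rule integral_cong_AE[OF m1 m2]) (use ae in \<open>eventually_elim, auto simp: indicator_def\<close>)
qed

lemma N_zero_AE:
  assumes apos: "\<forall>x\<in>{0<..1}. a x > 0"
    and fi: "set_integrable lborel {0<..<1} (\<lambda>x. (f x)^2 / a x)"
    and z: "nL2w a f = 0"
  shows "AE x in lborel. x \<in> {0<..<1} \<longrightarrow> f x = 0"
proof -
  have i: "integrable lborel (\<lambda>x. indicator {0<..<1} x *\<^sub>R ((f x)^2 / a x))"
    using fi by (simp add: set_integrable_def)
  have nn: "AE x in lborel. 0 \<le> indicator {0<..<1} x *\<^sub>R ((f x)^2 / a x)"
  proof (rule AE_I2)
    fix x :: real
    show "0 \<le> indicator {0<..<1} x *\<^sub>R ((f x)^2 / a x)"
    proof (cases "x \<in> {0<..<1}")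
      case True hence "a x > 0" using apos by auto
      thus ?thesis using True by simp
    qed simp
  qed
  have "AE x in lborel. indicator {0<..<1} x *\<^sub>R ((f x)^2 / a x) = 0"
    using integral_nonneg_eq_0_iff_AE[OF i nn] z by (simp add: nL2w_def set_lebesgue_integral_def)
  thus ?thesis
  proof eventually_elim
    case (elim x)
    show ?case
    proof
      assume x: "x \<in> {0<..<1}"
      hence "a x > 0" using apos by auto
      thus "f x = 0" using elim x by simp
    qed
  qed
qed

lemma fatou_N:
  fixes g :: "nat \<Rightarrow> real \<Rightarrow> real"
  assumes apos: "\<forall>x\<in>{0<..1}. a x > 0" and am: "set_borel_measurable lborel {0<..<1} a"
    and gm: "\<And>p. set_borel_measurable lborel {0<..<1} (g p)"
    and gi: "\<And>p. set_integrable lborel {0<..<1} (\<lambda>x. (g p x)^2 / a x)"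
    and hm: "set_borel_measurable lborel {0<..<1} h"
    and conv: "AE x in lborel. x \<in> {0<..<1} \<longrightarrow> (\<lambda>p. g p x) \<longlonglongrightarrow> h x"
    and ev: "eventually (\<lambda>p. nL2w a (g p) \<le> B) sequentially"
  shows "set_integrable lborel {0<..<1} (\<lambda>x. (h x)^2 / a x)" and "nL2w a h \<le> B"
proof -
  have ap: "\<And>x. x \<in> {0<..<1} \<Longrightarrow> 0 < a x" using apos by auto
  define G where "G p x = indicator {0<..<1} x * ((g p x)^2 / a x)" for p x
  define H where "H x = indicator {0<..<1} x * ((h x)^2 / a x)" for x
  have Gnn: "0 \<le> G p x" for p x
  proof (cases "x \<in> {0<..<1}")
    case True hence "a x > 0" by (rule ap)
    thus ?thesis using True by (simp add: G_def)
  next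
    case False thus ?thesis by (simp add: G_def)
  qed
  have Hnn: "0 \<le> H x" for x
  proof (cases "x \<in> {0<..<1}")
    case True hence "a x > 0" by (rule ap)
    thus ?thesis using True by (simp add: H_def)
  next
    case False thus ?thesis by (simp add: H_def)
  qed
  have Gi: "integrable lborel (G p)" for p
  proof -
    have e: "G p = (\<lambda>x. indicator {0<..<1} x *\<^sub>R ((g p x)^2 / a x))" by (simp add: G_def fun_eq_iff)
    show ?thesis unfolding e using gi[of p] by (simp only: set_integrable_def)
  qed
  have Gm: "G p \<in> borel_measurable lborel" for p using Gi[of p] by (rule borel_measurable_integrable)
  have eH: "H = (\<lambda>x. indicator {0<..<1} x *\<^sub>R ((h x)^2 / a x))" by (simp add: H_def fun_eq_iff)
  have Hm: "H \<in> borel_measurable lborel"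
    unfolding eH using set_meas_sq_div[OF hm am] by (simp only: set_borel_measurable_def)
  have NG: "(\<integral>\<^sup>+ x. ennreal (G p x) \<partial>lborel) = ennreal (nL2w a (g p))" for p
    unfolding nL2w_def set_lebesgue_integral_def real_scaleR_def G_def[symmetric]
    by (rule nn_integral_eq_integral[OF Gi]) (simp add: Gnn)
  obtain p0 where "nL2w a (g p0) \<le> B" using ev eventually_sequentially by auto
  hence B0: "0 \<le> B" using nL2w_nonneg[OF apos, of "g p0"] by linarith
  have "(\<integral>\<^sup>+ x. ennreal (H x) \<partial>lborel) = (\<integral>\<^sup>+ x. liminf (\<lambda>p. ennreal (G p x)) \<partial>lborel)"
  proof (rule nn_integral_cong_AE)
    show "AE x in lborel. ennreal (H x) = liminf (\<lambda>p. ennreal (G p x))"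
      using conv
    proof eventually_elim
      case (elim x)
      show ?case
      proof (cases "x \<in> {0<..<1}")
        case True
        have "(\<lambda>p. g p x) \<longlonglongrightarrow> h x" using elim True by simp
        hence "(\<lambda>p. indicator {0<..<1} x * ((g p x)^2 / a x)) \<longlonglongrightarrow> indicator {0<..<1} x * ((h x)^2 / a x)"
          using ap[OF True] by (intro tendsto_intros) auto
        hence "(\<lambda>p. ennreal (G p x)) \<longlonglongrightarrow> ennreal (H x)"
          unfolding G_def H_def by (rule tendsto_ennrealI)
        thus ?thesis by (simp add: lim_imp_Liminf)
      next
        case False thus ?thesis by (simp add: G_def H_def Liminf_const)
      qed
    qed
  qed
  also have "\<dots> \<le> liminf (\<lambda>p. \<integral>\<^sup>+ x. ennreal (G p x) \<partial>lborel)"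
    by (rule nn_integral_liminf) (use Gm in measurable)
  also have "\<dots> = liminf (\<lambda>p. ennreal (nL2w a (g p)))" by (simp add: NG)
  also have "\<dots> \<le> ennreal B"
    by (rule Liminf_le) (use ev in \<open>auto elim: eventually_mono intro: ennreal_leI\<close>)
  finally have fin: "(\<integral>\<^sup>+ x. ennreal (H x) \<partial>lborel) \<le> ennreal B" .
  have Hi: "integrable lborel H"
    apply (rule integrableI_bounded[OF Hm])
    using fin Hnn by (simp add: top.not_eq_extremum order_le_less_trans)
  thus "set_integrable lborel {0<..<1} (\<lambda>x. (h x)^2 / a x)"
    unfolding eH by (simp only: set_integrable_def)
  have "nL2w a h = integral\<^sup>L lborel H" unfolding eH by (simp only: nL2w_def set_lebesgue_integral_def)
  also have "\<dots> = enn2real (\<integral>\<^sup>+ x. ennreal (H x) \<partial>lborel)"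
    by (rule integral_eq_nn_integral) (use Hm Hnn in auto)
  also have "\<dots> \<le> B" using fin B0 by (simp add: enn2real_leI)
  finally show "nL2w a h \<le> B" .
qed

lemma ae_conv:
  fixes f :: "nat \<Rightarrow> real \<Rightarrow> real"
  assumes apos: "\<forall>x\<in>{0<..1}. a x > 0"
    and di: "\<And>j. set_integrable lborel {0<..<1} (\<lambda>x. (f (Suc j) x - f j x)^2 / a x)"
    and bj: "\<And>j. nL2w a (\<lambda>x. f (Suc j) x - f j x) \<le> (1/4)^j"
  shows "AE x in lborel. x \<in> {0<..<1} \<longrightarrow> convergent (\<lambda>j. f j x)"
proof -
  have ap: "\<And>x. x \<in> {0<..<1} \<Longrightarrow> 0 < a x" using apos by auto
  define h where "h j x = indicator {0<..<1} x * (2^j * ((f (Suc j) x - f j x)^2 / a x))" for j x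
  have hnn: "0 \<le> h j x" for j x
  proof (cases "x \<in> {0<..<1}")
    case True hence "a x > 0" by (rule ap)
    thus ?thesis using True by (simp add: h_def)
  next
    case False thus ?thesis by (simp add: h_def)
  qed
  have eh: "h j = (\<lambda>x. 2^j * (indicator {0<..<1} x *\<^sub>R ((f (Suc j) x - f j x)^2 / a x)))" for j
    by (simp add: h_def fun_eq_iff)
  have hi: "integrable lborel (h j)" for j
    unfolding eh using di[of j] unfolding set_integrable_def by (intro integrable_mult_right)
  have hm: "h j \<in> borel_measurable lborel" for j using hi[of j] by (rule borel_measurable_integrable)
  have hint: "(\<integral>\<^sup>+ x. ennreal (h j x) \<partial>lborel) \<le> ennreal ((1/2)^j)" for j
  proof -
    have "integral\<^sup>L lborel (h j) = 2^j * nL2w a (\<lambda>x. f (Suc j) x - f j x)"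
      unfolding eh nL2w_def set_lebesgue_integral_def by (rule integral_mult_right_zero)
    also have "\<dots> \<le> 2^j * (1/4)^j" using bj[of j] by (intro mult_left_mono) auto
    also have "\<dots> = (1/2)^j" by (simp add: power_mult_distrib[symmetric])
    finally have r: "integral\<^sup>L lborel (h j) \<le> (1/2)^j" .
    have "(\<integral>\<^sup>+ x. ennreal (h j x) \<partial>lborel) = ennreal (integral\<^sup>L lborel (h j))"
      by (rule nn_integral_eq_integral[OF hi]) (simp add: hnn)
    thus ?thesis using r by (simp add: ennreal_leI)
  qed
  have "(\<integral>\<^sup>+ x. (\<Sum>j. ennreal (h j x)) \<partial>lborel) = (\<Sum>j. \<integral>\<^sup>+ x. ennreal (h j x) \<partial>lborel)"
    by (rule nn_integral_suminf) (use hm in measurable)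
  also have "\<dots> \<le> (\<Sum>j. ennreal ((1/2)^j))"
    by (intro suminf_le hint) auto
  also have "\<dots> = ennreal (\<Sum>j. (1/2::real)^j)"
    by (rule suminf_ennreal2) auto
  also have "\<dots> < \<infinity>" by simp
  finally have "(\<integral>\<^sup>+ x. (\<Sum>j. ennreal (h j x)) \<partial>lborel) \<noteq> \<infinity>" by simp
  hence AEfin: "AE x in lborel. (\<Sum>j. ennreal (h j x)) \<noteq> \<infinity>"
    by (intro nn_integral_PInf_AE) (use hm in measurable)
  show ?thesis using AEfin
  proof eventually_elim
    case (elim x)
    show ?case
    proof
      assume x: "x \<in> {0<..<1}"
      have ax: "a x > 0" using ap[OF x] .
      define \<Delta> where "\<Delta> j = f (Suc j) x - f j x" for j
      have sh: "summable (\<lambda>j. h j x)"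
        by (rule summable_suminf_not_top) (use elim hnn in auto)
      hence "(\<lambda>j. h j x) \<longlonglongrightarrow> 0" by (rule summable_LIMSEQ_zero)
      hence ev: "eventually (\<lambda>j. h j x < 1) sequentially" by (rule order_tendstoD) simp
      have bnd: "eventually (\<lambda>j. norm (\<Delta> j) \<le> sqrt (a x) * sqrt (1/2) ^ j) sequentially"
        using ev
      proof eventually_elim
        case (elim j)
        have "2^j * ((\<Delta> j)^2 / a x) < 1" using elim x by (simp add: h_def \<Delta>_def)
        hence "(\<Delta> j)^2 < a x / 2^j" using ax by (simp add: field_simps)
        hence "(\<Delta> j)^2 \<le> a x * (1/2)^j" by (simp add: field_simps)
        hence "sqrt ((\<Delta> j)^2) \<le> sqrt (a x * (1/2)^j)" by (rule real_sqrt_le_mono)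
        hence "\<bar>\<Delta> j\<bar> \<le> sqrt (a x * (1/2)^j)" by (simp only: real_sqrt_abs)
        thus ?case by (simp add: real_sqrt_mult real_sqrt_power)
      qed
      have sg: "summable (\<lambda>j. sqrt (a x) * sqrt (1/2) ^ j)"
        by (intro summable_mult summable_geometric) simp
      have "summable \<Delta>" by (rule summable_comparison_test_ev[OF bnd sg])
      hence "(\<lambda>n. \<Sum>i<n. \<Delta> i) \<longlonglongrightarrow> suminf \<Delta>" by (rule summable_LIMSEQ)
      hence "(\<lambda>n. f 0 x + (\<Sum>i<n. \<Delta> i)) \<longlonglongrightarrow> f 0 x + suminf \<Delta>" by (intro tendsto_intros)
      moreover have "f 0 x + (\<Sum>i<n. \<Delta> i) = f n x" for n
        unfolding \<Delta>_def by (simp add: sum_lessThan_telescope[of "\<lambda>j. f j x"])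
      ultimately show "convergent (\<lambda>j. f j x)" unfolding convergent_def by auto
    qed
  qed
qed

lemma N3:
  assumes apos: "\<forall>x\<in>{0<..1}. a x > 0" and am: "set_borel_measurable lborel {0<..<1} a"
    and M: "\<forall>x\<in>{0..1}. a x \<le> M"
    and f1: "L2w a f1" and f2: "L2w a f2" and f3: "L2w a f3" and f4: "L2w a f4"
  shows "nL2w a (\<lambda>x. f1 x - f4 x) \<le> 2 * nL2w a (\<lambda>x. f1 x - f2 x) + 4 * nL2w a (\<lambda>x. f2 x - f3 x) + 4 * nL2w a (\<lambda>x. f3 x - f4 x)"
proof -
  have L12: "L2w a (\<lambda>x. f1 x - f2 x)" by (rule L2w_diff[OF apos am M f1 f2])
  have L23: "L2w a (\<lambda>x. f2 x - f3 x)" by (rule L2w_diff[OF apos am M f2 f3])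
  have L34: "L2w a (\<lambda>x. f3 x - f4 x)" by (rule L2w_diff[OF apos am M f3 f4])
  have L24: "L2w a (\<lambda>x. f2 x - f4 x)" by (rule L2w_diff[OF apos am M f2 f4])
  have e1: "(\<lambda>x. f1 x - f4 x) = (\<lambda>x. (f1 x - f2 x) + (f2 x - f4 x))" by auto
  have e2: "(\<lambda>x. f2 x - f4 x) = (\<lambda>x. (f2 x - f3 x) + (f3 x - f4 x))" by auto
  have s1: "nL2w a (\<lambda>x. f1 x - f4 x) \<le> 2 * nL2w a (\<lambda>x. f1 x - f2 x) + 2 * nL2w a (\<lambda>x. f2 x - f4 x)"
    unfolding e1 by (rule N_sum(2)[OF apos _ _ _ _ am]) (use L12 L24 in \<open>auto simp: L2w_def\<close>)
  have s2: "nL2w a (\<lambda>x. f2 x - f4 x) \<le> 2 * nL2w a (\<lambda>x. f2 x - f3 x) + 2 * nL2w a (\<lambda>x. f3 x - f4 x)"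
    unfolding e2 by (rule N_sum(2)[OF apos _ _ _ _ am]) (use L23 L34 in \<open>auto simp: L2w_def\<close>)
  show ?thesis using s1 s2 by linarith
qed

lemma N_swap: "nL2w a (\<lambda>x. f x - g x) = nL2w a (\<lambda>x. g x - f x)"
  by (simp add: nL2w_def power2_commute)

lemma completion:
  fixes F :: "nat \<Rightarrow> real \<Rightarrow> real \<Rightarrow> real"
  assumes acont: "continuous_on {0..1} a" and apos: "\<forall>x\<in>{0<..1}. a x > 0"
    and M: "\<forall>x\<in>{0..1}. a x \<le> M" and T: "T > 0"
    and FY: "\<And>n. inY a T (F n)"
    and cauchy: "\<And>\<epsilon>. \<epsilon> > 0 \<Longrightarrow> \<exists>N0. \<forall>n\<ge>N0. \<forall>p\<ge>N0. \<forall>t\<in>{0..T}. nL2w a (\<lambda>x. F n t x - F p t x) < \<epsilon>"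
  shows "\<exists>r w. strict_mono r \<and> inY a T w
     \<and> (\<forall>\<epsilon>>0. eventually (\<lambda>n. \<forall>t\<in>{0..T}. nL2w a (\<lambda>x. F (r n) t x - w t x) < \<epsilon>) sequentially)
     \<and> ((\<lambda>n. LINT p:Qset T|lborel. (case p of (t,x) \<Rightarrow> (F (r n) t x - w t x)^2)) \<longlonglongrightarrow> 0)"
proof -
  have am: "set_borel_measurable lborel {0<..<1} a" by (rule a_meas[OF acont])
  have "\<forall>j. \<exists>N. \<forall>n\<ge>N. \<forall>p\<ge>N. \<forall>t\<in>{0..T}. nL2w a (\<lambda>x. F n t x - F p t x) < (1/4::real)^j"
    using cauchy by simp
  from choice[OF this] obtain N0 where N0: "\<And>j. \<forall>n\<ge>N0 j. \<forall>p\<ge>N0 j. \<forall>t\<in>{0..T}. nL2w a (\<lambda>x. F n t x - F p t x) < (1/4::real)^j"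
    by blast
  define r where "r j = j + (\<Sum>i\<le>j. N0 i)" for j
  have rsm: "strict_mono r" unfolding strict_mono_Suc_iff r_def by simp
  have rN: "N0 j \<le> r j" for j
  proof -
    have "N0 j \<le> (\<Sum>i\<le>j. N0 i)" by (rule member_le_sum) auto
    thus ?thesis by (simp add: r_def)
  qed
  have KB: "nL2w a (\<lambda>x. F (r n) t x - F (r j) t x) < (1/4)^j" if "j \<le> n" "t \<in> {0..T}" for j n t
  proof -
    have "r j \<le> r n" using rsm that(1) by (simp add: strict_mono_less_eq)
    thus ?thesis using N0[of j] rN[of j] that(2) by auto
  qed
  have FL: "L2w a (F n t)" if "t \<in> {0..T}" for n t using FY[of n] that by (auto simp: inY_def)
  have FQ: "set_borel_measurable lborel (Qset T) (case_prod (F n))" for n using FY[of n] by (auto simp: inY_def)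
  define w where "w t x = lim (\<lambda>j. F (r j) t x)" for t x
  have PW: "AE x in lborel. x \<in> {0<..<1} \<longrightarrow> (\<lambda>j. F (r j) t x) \<longlonglongrightarrow> w t x" if t: "t \<in> {0..T}" for t
  proof -
    have "AE x in lborel. x \<in> {0<..<1} \<longrightarrow> convergent (\<lambda>j. F (r j) t x)"
    proof (rule ae_conv[OF apos])
      fix j
      show "set_integrable lborel {0<..<1} (\<lambda>x. (F (r (Suc j)) t x - F (r j) t x)^2 / a x)"
        using L2w_diff[OF apos am M FL[OF t] FL[OF t]] by (simp add: L2w_def)
      show "nL2w a (\<lambda>x. F (r (Suc j)) t x - F (r j) t x) \<le> (1/4)^j"
        using KB[of j "Suc j" t] t by simp
    qed
    thus ?thesis by eventually_elim (auto simp: w_def convergent_LIMSEQ_iff)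
  qed
  have wm: "set_borel_measurable lborel {0<..<1} (w t)" if t: "t \<in> {0..T}" for t
  proof -
    have "(\<lambda>x. lim (\<lambda>j. indicator {0<..<1} x *\<^sub>R F (r j) t x)) \<in> borel_measurable lborel"
      by (rule borel_measurable_lim_metric) (use FL[OF t] in \<open>simp add: L2w_def set_borel_measurable_def\<close>)
    also have "(\<lambda>x. lim (\<lambda>j. indicator {0<..<1} x *\<^sub>R F (r j) t x)) = (\<lambda>x. indicator {0<..<1} x *\<^sub>R w t x)"
      by (auto simp: fun_eq_iff w_def indicator_def lim_const)
    finally show ?thesis unfolding set_borel_measurable_def .
  qed
  have wQ: "set_borel_measurable lborel (Qset T) (case_prod w)"
  proof -
    have "(\<lambda>p. lim (\<lambda>j. indicator (Qset T) p *\<^sub>R case_prod (F (r j)) p)) \<in> borel_measurable lborel"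
      by (rule borel_measurable_lim_metric) (use FQ in \<open>simp add: set_borel_measurable_def\<close>)
    also have "(\<lambda>p. lim (\<lambda>j. indicator (Qset T) p *\<^sub>R case_prod (F (r j)) p)) = (\<lambda>p. indicator (Qset T) p *\<^sub>R case_prod w p)"
      by (auto simp: fun_eq_iff w_def indicator_def lim_const split: prod.splits)
    finally show ?thesis unfolding set_borel_measurable_def .
  qed
  have DB: "set_integrable lborel {0<..<1} (\<lambda>x. (F (r j) t x - w t x)^2 / a x) \<and> nL2w a (\<lambda>x. F (r j) t x - w t x) \<le> (1/4)^j"
    if t: "t \<in> {0..T}" for t j
  proof -
    have fm: "set_borel_measurable lborel {0<..<1} (F n t)" for n using FL[OF t] by (simp add: L2w_def)
    note fat = fatou_N[OF apos am, where g = "\<lambda>p x. F (r j) t x - F (r p) t x" and h = "\<lambda>x. F (r j) t x - w t x" and B = "(1/4)^j"]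
    have c1: "set_integrable lborel {0<..<1} (\<lambda>x. (F (r j) t x - w t x)^2 / a x)"
    proof (rule fat(1))
      show "\<And>p. set_borel_measurable lborel {0<..<1} (\<lambda>x. F (r j) t x - F (r p) t x)"
        by (rule set_meas_diff[OF fm fm])
      show "\<And>p. set_integrable lborel {0<..<1} (\<lambda>x. (F (r j) t x - F (r p) t x)^2 / a x)"
        using L2w_diff[OF apos am M FL[OF t] FL[OF t]] by (simp add: L2w_def)
      show "set_borel_measurable lborel {0<..<1} (\<lambda>x. F (r j) t x - w t x)"
        by (rule set_meas_diff[OF fm wm[OF t]])
      show "AE x in lborel. x \<in> {0<..<1} \<longrightarrow> (\<lambda>p. F (r j) t x - F (r p) t x) \<longlonglongrightarrow> F (r j) t x - w t x"
        using PW[OF t] by eventually_elim (auto intro: tendsto_intros)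
      show "\<forall>\<^sub>F p in sequentially. nL2w a (\<lambda>x. F (r j) t x - F (r p) t x) \<le> (1/4)^j"
        using eventually_ge_at_top[of j]
      proof eventually_elim
        case (elim p)
        show ?case using KB[OF elim t] N_swap[of a "F (r j) t" "F (r p) t"] by simp
      qed
    qed
    have c2: "nL2w a (\<lambda>x. F (r j) t x - w t x) \<le> (1/4)^j"
    proof (rule fat(2))
      show "\<And>p. set_borel_measurable lborel {0<..<1} (\<lambda>x. F (r j) t x - F (r p) t x)"
        by (rule set_meas_diff[OF fm fm])
      show "\<And>p. set_integrable lborel {0<..<1} (\<lambda>x. (F (r j) t x - F (r p) t x)^2 / a x)"
        using L2w_diff[OF apos am M FL[OF t] FL[OF t]] by (simp add: L2w_def)
      show "set_borel_measurable lborel {0<..<1} (\<lambda>x. F (r j) t x - w t x)"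
        by (rule set_meas_diff[OF fm wm[OF t]])
      show "AE x in lborel. x \<in> {0<..<1} \<longrightarrow> (\<lambda>p. F (r j) t x - F (r p) t x) \<longlonglongrightarrow> F (r j) t x - w t x"
        using PW[OF t] by eventually_elim (auto intro: tendsto_intros)
      show "\<forall>\<^sub>F p in sequentially. nL2w a (\<lambda>x. F (r j) t x - F (r p) t x) \<le> (1/4)^j"
        using eventually_ge_at_top[of j]
      proof eventually_elim
        case (elim p)
        show ?case using KB[OF elim t] N_swap[of a "F (r j) t" "F (r p) t"] by simp
      qed
    qed
    show ?thesis using c1 c2 by simp
  qed
  have DL: "L2w a (\<lambda>x. F (r j) t x - w t x)" if t: "t \<in> {0..T}" for t j
    by (rule L2w_of[OF apos M set_meas_diff[OF _ wm[OF t]]]) (use FL[OF t] DB[OF t] in \<open>auto simp: L2w_def\<close>)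
  have wL: "L2w a (w t)" if t: "t \<in> {0..T}" for t
    using L2w_diff[OF apos am M FL[OF t, of "r 0"] DL[OF t, of 0]] by simp
  have q0: "(\<lambda>j. (1/4::real)^j) \<longlonglongrightarrow> 0" by (rule LIMSEQ_power_zero) simp
  have smallj: "\<exists>j. (1/4::real)^j < e" if "e > 0" for e
    using that by (intro real_arch_pow_inv) auto
  have wC: "((\<lambda>t. nL2w a (\<lambda>x. w t x - w t0 x)) \<longlongrightarrow> 0) (at t0 within {0..T})" if t0: "t0 \<in> {0..T}" for t0
  proof (rule tendstoI)
    fix e :: real assume e: "e > 0"
    obtain j where j: "(1/4::real)^j < e/12" using smallj[of "e/12"] e by auto
    have FC: "((\<lambda>t. nL2w a (\<lambda>x. F (r j) t x - F (r j) t0 x)) \<longlongrightarrow> 0) (at t0 within {0..T})"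
      using FY[of "r j"] t0 by (auto simp: inY_def)
    have ev1: "eventually (\<lambda>t. nL2w a (\<lambda>x. F (r j) t x - F (r j) t0 x) < e/8) (at t0 within {0..T})"
      using order_tendstoD(2)[OF FC, of "e/8"] e by simp
    have ev2: "eventually (\<lambda>t. t \<in> {0..T}) (at t0 within {0..T})"
      by (simp add: eventually_at_filter)
    show "eventually (\<lambda>t. dist (nL2w a (\<lambda>x. w t x - w t0 x)) 0 < e) (at t0 within {0..T})"
      using ev1 ev2
    proof eventually_elim
      case (elim t)
      have "nL2w a (\<lambda>x. w t x - w t0 x) \<le> 2 * nL2w a (\<lambda>x. w t x - F (r j) t x) + 4 * nL2w a (\<lambda>x. F (r j) t x - F (r j) t0 x) + 4 * nL2w a (\<lambda>x. F (r j) t0 x - w t0 x)"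
        by (rule N3[OF apos am M wL[OF elim(2)] FL[OF elim(2)] FL[OF t0] wL[OF t0]])
      also have "nL2w a (\<lambda>x. w t x - F (r j) t x) \<le> (1/4)^j"
        using DB[OF elim(2), of j] N_swap[of a "w t" "F (r j) t"] by simp
      also have "nL2w a (\<lambda>x. F (r j) t0 x - w t0 x) \<le> (1/4)^j"
        using DB[OF t0, of j] by simp
      finally have "nL2w a (\<lambda>x. w t x - w t0 x) \<le> 2 * (1/4)^j + 4 * nL2w a (\<lambda>x. F (r j) t x - F (r j) t0 x) + 4 * (1/4)^j"
        by simp
      also have "\<dots> < e" using elim(1) j by linarith
      finally show ?case using nL2w_nonneg[OF apos] by simp
    qed
  qed
  have dQ: "set_borel_measurable lborel (Qset T) (case_prod (\<lambda>t x. F (r 0) t x - w t x))"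
  proof -
    have "set_borel_measurable lborel (Qset T) (\<lambda>p. case_prod (F (r 0)) p - case_prod w p)"
      by (rule set_meas_diff[OF FQ wQ])
    thus ?thesis by (simp add: case_prod_beta')
  qed
  have sec: "\<forall>t\<in>{0<..<T}. set_integrable lborel {0<..<1} (\<lambda>x. (F (r j) t x - w t x)^2 / a x)" for j
    using DB by auto
  have secb: "\<forall>t\<in>{0<..<T}. nL2w a (\<lambda>x. F (r j) t x - w t x) \<le> (1/4)^j" for j
    using DB by auto
  have dQ2: "set_integrable lborel (Qset T) (\<lambda>(t,x). (F (r 0) t x - w t x)^2)"
    by (rule L2Q(1)[OF M apos dQ sec secb T])
  have FQ2: "set_integrable lborel (Qset T) (\<lambda>(t,x). (F (r 0) t x)^2)"
    using FY[of "r 0"] by (simp add: inY_def)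
  have wQ2: "set_integrable lborel (Qset T) (\<lambda>(t,x). (w t x)^2)"
  proof -
    have ub: "set_integrable lborel (Qset T) (\<lambda>p. 2 * (case p of (t,x) \<Rightarrow> (F (r 0) t x)^2) + 2 * (case p of (t,x) \<Rightarrow> (F (r 0) t x - w t x)^2))"
      by (rule set_int_lin[OF FQ2 dQ2])
    have m: "set_borel_measurable lborel (Qset T) (\<lambda>p. (case_prod w p)^2)"
      by (rule set_meas_sq[OF wQ])
    have "set_integrable lborel (Qset T) (\<lambda>p. (case_prod w p)^2)"
    proof (rule set_integrable_bound[OF ub m], rule AE_I2, rule impI)
      fix p :: "real \<times> real"
      obtain t x where p: "p = (t,x)" by (cases p)
      have "(w t x)^2 \<le> 2 * (F (r 0) t x)^2 + 2 * (w t x - F (r 0) t x)^2" by (rule sq_split)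
      also have "(w t x - F (r 0) t x)^2 = (F (r 0) t x - w t x)^2" by (rule power2_commute)
      finally show "norm ((case_prod w p)^2) \<le> norm (2 * (case p of (t,x) \<Rightarrow> (F (r 0) t x)^2) + 2 * (case p of (t,x) \<Rightarrow> (F (r 0) t x - w t x)^2))"
        unfolding p by simp
    qed
    thus ?thesis by (simp add: case_prod_beta')
  qed
  have wY: "inY a T w" unfolding inY_def using wL wC wQ wQ2 by blast
  have unif: "\<forall>\<epsilon>>0. eventually (\<lambda>n. \<forall>t\<in>{0..T}. nL2w a (\<lambda>x. F (r n) t x - w t x) < \<epsilon>) sequentially"
  proof (intro allI impI)
    fix \<epsilon> :: real assume \<epsilon>: "\<epsilon> > 0"
    obtain j where j: "(1/4::real)^j < \<epsilon>" using smallj[OF \<epsilon>] by auto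
    show "eventually (\<lambda>n. \<forall>t\<in>{0..T}. nL2w a (\<lambda>x. F (r n) t x - w t x) < \<epsilon>) sequentially"
      using eventually_ge_at_top[of j]
    proof eventually_elim
      case (elim n)
      have "(1/4::real)^n \<le> (1/4)^j" using elim by (intro power_decreasing) auto
      thus ?case using DB j by (meson le_less_trans order_trans)
    qed
  qed
  have L2c: "(\<lambda>n. LINT p:Qset T|lborel. (case p of (t,x) \<Rightarrow> (F (r n) t x - w t x)^2)) \<longlonglongrightarrow> 0"
  proof (rule tendsto_sandwich[of "\<lambda>n. 0" _ _ "\<lambda>n. M * T * (1/4)^n"])
    show "\<forall>\<^sub>F n in sequentially. 0 \<le> (LINT p:Qset T|lborel. (case p of (t,x) \<Rightarrow> (F (r n) t x - w t x)^2))"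
      by (intro always_eventually allI set_int_nonneg) (auto split: prod.splits)
    show "\<forall>\<^sub>F n in sequentially. (LINT p:Qset T|lborel. (case p of (t,x) \<Rightarrow> (F (r n) t x - w t x)^2)) \<le> M * T * (1/4)^n"
    proof (intro always_eventually allI)
      fix n
      have dQn: "set_borel_measurable lborel (Qset T) (case_prod (\<lambda>t x. F (r n) t x - w t x))"
      proof -
        have "set_borel_measurable lborel (Qset T) (\<lambda>p. case_prod (F (r n)) p - case_prod w p)"
          by (rule set_meas_diff[OF FQ wQ])
        thus ?thesis by (simp add: case_prod_beta')
      qed
      show "(LINT p:Qset T|lborel. (case p of (t,x) \<Rightarrow> (F (r n) t x - w t x)^2)) \<le> M * T * (1/4)^n"
        by (rule L2Q(2)[OF M apos dQn sec secb T])
    qed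
    show "(\<lambda>n. 0::real) \<longlonglongrightarrow> 0" by simp
    show "(\<lambda>n. M * T * (1/4::real)^n) \<longlonglongrightarrow> 0"
      using tendsto_mult_left[OF q0, of "M*T"] by simp
  qed
  show ?thesis using rsm wY unif L2c by blast
qed

lemma holder_cont:
  fixes D :: "real \<Rightarrow> real"
  assumes DH: "\<forall>x\<in>S. \<forall>y\<in>S. (D x - D y)^2 \<le> \<beta> * \<bar>x - y\<bar>" and b: "\<beta> \<ge> 0"
  shows "continuous_on S D"
  unfolding continuous_on_iff
proof (intro ballI allI impI)
  fix x e assume x: "x \<in> S" and e: "(0::real) < e"
  show "\<exists>d>0. \<forall>x'\<in>S. dist x' x < d \<longrightarrow> dist (D x') (D x) < e"
  proof (intro exI[of _ "e^2 / (\<beta> + 1)"] conjI ballI impI)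
    show "e^2 / (\<beta> + 1) > 0" using e b by simp
    fix x' assume x': "x' \<in> S" and d: "dist x' x < e^2 / (\<beta> + 1)"
    have "(D x' - D x)^2 \<le> \<beta> * \<bar>x' - x\<bar>" using DH x x' by blast
    also have "\<dots> \<le> \<beta> * (e^2 / (\<beta> + 1))" using d b by (intro mult_left_mono) (auto simp: dist_real_def)
    also have "\<dots> < e^2"
    proof -
      have "\<beta> * (e^2 / (\<beta> + 1)) = e^2 * (\<beta> / (\<beta> + 1))" by simp
      also have "\<dots> < e^2 * 1" using e b by (intro mult_strict_left_mono) auto
      finally show ?thesis by simp
    qed
    finally have "\<bar>D x' - D x\<bar>^2 < e^2" by simp
    hence "\<bar>D x' - D x\<bar> < e" using power_less_imp_less_base[OF _ less_imp_le[OF e]] by blast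
    thus "dist (D x') (D x) < e" by (simp add: dist_real_def)
  qed
qed

lemma holder_sq0:
  fixes D :: "real \<Rightarrow> real"
  assumes DH: "\<forall>x\<in>{0..1}. \<forall>y\<in>{0..1}. (D x - D y)^2 \<le> \<beta> * \<bar>x - y\<bar>" and D0: "D 0 = 0"
    and x: "x \<in> {0..1}"
  shows "(D x)^2 \<le> \<beta> * x"
  using DH x D0 by (metis atLeastAtMost_iff abs_of_nonneg diff_zero order_refl zero_le_one)

lemma holder_L2w:
  fixes D :: "real \<Rightarrow> real"
  assumes c: "c > 0" and alow: "\<forall>x\<in>{0<..1}. c * x powr \<alpha> \<le> a x" and al: "\<alpha> < 2"
    and apos: "\<forall>x\<in>{0<..1}. a x > 0" and M: "\<forall>x\<in>{0..1}. a x \<le> M"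
    and am: "set_borel_measurable lborel {0<..<1} a"
    and DH: "\<forall>x\<in>{0..1}. \<forall>y\<in>{0..1}. (D x - D y)^2 \<le> \<beta> * \<bar>x - y\<bar>" and D0: "D 0 = 0" and b: "\<beta> \<ge> 0"
  shows "L2w a D"
proof -
  have "continuous_on {0..1} D" by (rule holder_cont[OF DH b])
  hence "continuous_on {0<..<1} D" by (rule continuous_on_subset) auto
  hence "(\<lambda>x. indicator {0<..<1} x *\<^sub>R D x) \<in> borel_measurable borel"
    by (intro borel_measurable_continuous_on_indicator) auto
  hence Dm: "set_borel_measurable lborel {0<..<1} D" by (simp add: set_borel_measurable_def)
  have ub: "set_integrable lborel {0<..<1} (\<lambda>x. (\<beta> / c) * x powr (1 - \<alpha>))"
    by (rule set_integrable_mult_right) (rule powr_set_integrable, use al in simp)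
  have Di: "set_integrable lborel {0<..<1} (\<lambda>x. (D x)^2 / a x)"
  proof (rule set_integrable_bound[OF ub set_meas_sq_div[OF Dm am]], rule AE_I2, rule impI)
    fix x :: real assume x: "x \<in> {0<..<1}"
    have ax: "a x > 0" "c * x powr \<alpha> \<le> a x" using x apos alow by auto
    have D2: "(D x)^2 \<le> \<beta> * x" by (rule holder_sq0[OF DH D0]) (use x in auto)
    have xp: "x powr \<alpha> > 0" using x by simp
    have "(D x)^2 / a x \<le> (\<beta> * x) / (c * x powr \<alpha>)"
      using D2 ax xp c b x by (intro frac_le) auto
    also have "\<dots> = (\<beta> / c) * (x / x powr \<alpha>)" by simp
    also have "x / x powr \<alpha> = x powr (1 - \<alpha>)" using x by (simp add: powr_diff)
    finally have "(D x)^2 / a x \<le> (\<beta> / c) * x powr (1 - \<alpha>)" .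
    moreover have "0 \<le> (D x)^2 / a x" using ax by simp
    ultimately show "norm ((D x)^2 / a x) \<le> norm ((\<beta> / c) * x powr (1 - \<alpha>))"
      by (metis abs_of_nonneg order_trans real_norm_def abs_ge_self)
  qed
  show ?thesis by (rule L2w_of[OF apos M Dm Di])
qed

lemma aux0: "(c::real) > 0 \<Longrightarrow> s * (e * c / d) / c = (s * e) / d"
  by (metis (no_types, lifting) divide_divide_eq_left mult.commute nonzero_mult_div_cancel_left order_less_irrefl times_divide_eq_right)

lemma aux_alg: "(c::real) > 0 \<Longrightarrow> s * (e * c / (2 * (s + 1))) / c = e / 2 * (s / (s + 1))"
  using aux0[of c s e "2 * (s + 1)"] by (simp add: mult.commute)

lemma set_int_one01: "set_integrable lborel {0<..<1::real} (\<lambda>x. 1::real)"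
  unfolding set_integrable_def by (simp add: integrable_real_indicator emeasure_lborel_Ioo)

lemma set_int_one01_val: "(LINT x:{0<..<1::real}|lborel. (1::real)) = 1"
  unfolding set_lebesgue_integral_def by (simp add: measure_def emeasure_lborel_Ioo)

lemma grid_point:
  fixes x :: real and J :: nat
  assumes x: "x \<in> {0..1}" and J: "J > 0"
  shows "\<exists>k\<le>J. \<bar>x - real k / real J\<bar> \<le> 1 / real J \<and> real k / real J \<in> {0..1}"
proof -
  define k where "k = nat \<lfloor>x * real J\<rfloor>"
  have xJ: "0 \<le> x * real J" using x by simp
  have k1: "real k \<le> x * real J" using xJ by (simp add: k_def)
  have k2: "x * real J < real k + 1" using xJ by (simp add: k_def)
  have "x * real J \<le> 1 * real J" using x by (intro mult_right_mono) auto
  hence kJ: "real k \<le> real J" using k1 by simp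
  have Jp: "real J > 0" using J by simp
  have "\<bar>x - real k / real J\<bar> \<le> 1 / real J"
  proof -
    have "0 \<le> x - real k / real J" using k1 Jp by (simp add: field_simps)
    moreover have "x - real k / real J \<le> 1 / real J"
    proof -
      have "x * real J - real k \<le> 1" using k2 by linarith
      hence "(x * real J - real k) / real J \<le> 1 / real J" by (rule divide_right_mono) (use Jp in simp)
      moreover have "x - real k / real J = (x * real J - real k) / real J" using Jp by (simp add: field_simps)
      ultimately show ?thesis by simp
    qed
    ultimately show ?thesis by simp
  qed
  moreover have "real k / real J \<in> {0..1}" using kJ Jp by (simp add: field_simps)
  moreover have "k \<le> J" using kJ by simp
  ultimately show ?thesis by blast
qed

lemma holder_N_small:
  fixes \<beta> \<eta>0 :: real
  assumes c: "c > 0" and alow: "\<forall>x\<in>{0<..1}. c * x powr \<alpha> \<le> a x" and a0: "0 < \<alpha>" and al: "\<alpha> < 2"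
    and apos: "\<forall>x\<in>{0<..1}. a x > 0" and b: "\<beta> \<ge> 0" and e: "\<eta>0 > 0"
  shows "\<exists>J::nat. J > 0 \<and> (\<exists>\<theta>>0. \<forall>D. D 0 = 0 \<longrightarrow> (\<forall>x\<in>{0..1}. \<forall>y\<in>{0..1}. (D x - D y)^2 \<le> \<beta> * \<bar>x - y\<bar>)
      \<longrightarrow> (\<forall>k\<le>J. \<bar>D (real k / real J)\<bar> \<le> \<theta>) \<longrightarrow> nL2w a D \<le> \<eta>0)"
proof -
  define \<gamma> where "\<gamma> = (2 - \<alpha>) / 2"
  have g0: "\<gamma> > 0" using al by (simp add: \<gamma>_def)
  define I where "I = (LINT x:{0<..<1}|lborel. x powr (-\<alpha>/2))"
  have Ii: "set_integrable lborel {0<..<1} (\<lambda>x::real. x powr (-\<alpha>/2))"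
    by (rule powr_set_integrable) (use al in simp)
  have I0: "0 \<le> I" unfolding I_def by (rule set_int_nonneg) simp
  define e' where "e' = min (1/2) (\<eta>0 * c / (2 * (\<beta> * I + 1)))"
  have bI: "\<beta> * I + 1 > 0" using b I0 by (simp add: add_nonneg_pos)
  have e'0: "e' > 0" using e c bI by (simp add: e'_def)
  have e'1: "e' < 1" by (simp add: e'_def)
  define \<delta> where "\<delta> = e' powr (1/\<gamma>)"
  have d0: "\<delta> > 0" using e'0 by (simp add: \<delta>_def)
  have dg: "\<delta> powr \<gamma> = e'" using e'0 g0 by (simp add: \<delta>_def powr_powr)
  have d1: "\<delta> < 1"
  proof (rule ccontr)
    assume "\<not> \<delta> < 1"
    hence "1 \<le> \<delta> powr \<gamma>" using g0 by (intro ge_one_powr_ge_zero) auto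
    thus False using dg e'1 by simp
  qed
  define \<eta> where "\<eta> = \<eta>0 * c * \<delta> powr \<alpha> / 2"
  have eta0: "\<eta> > 0" using e c d0 by (simp add: \<eta>_def)
  obtain J :: nat where J: "4 * \<beta> / \<eta> < real J" using reals_Archimedean2 by blast
  have "0 \<le> 4 * \<beta> / \<eta>" using b eta0 by simp
  hence Jp: "real J > 0" using J by linarith
  hence J0: "J > 0" by simp
  have Jb: "2 * \<beta> / real J \<le> \<eta> / 2"
  proof -
    have "4 * \<beta> \<le> \<eta> * real J" using J eta0 by (simp add: field_simps)
    thus ?thesis using Jp eta0 by (simp add: field_simps)
  qed
  define \<theta> where "\<theta> = sqrt (\<eta> / 4)"
  have th0: "\<theta> > 0" using eta0 by (simp add: \<theta>_def)
  have th2: "\<theta>^2 = \<eta> / 4" using eta0 by (simp add: \<theta>_def)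
  show ?thesis
  proof (intro exI[of _ J] conjI J0 exI[of _ \<theta>] th0 allI impI)
    fix D :: "real \<Rightarrow> real"
    assume D0: "D 0 = 0" and DH: "\<forall>x\<in>{0..1}. \<forall>y\<in>{0..1}. (D x - D y)^2 \<le> \<beta> * \<bar>x - y\<bar>"
      and Dg: "\<forall>k\<le>J. \<bar>D (real k / real J)\<bar> \<le> \<theta>"
    have far: "(D x)^2 \<le> \<eta>" if x: "x \<in> {0..1}" for x
    proof -
      obtain k where k: "k \<le> J" "\<bar>x - real k / real J\<bar> \<le> 1 / real J" "real k / real J \<in> {0..1}"
        using grid_point[OF x J0] by blast
      have "(D x)^2 \<le> 2 * (D (real k / real J))^2 + 2 * (D x - D (real k / real J))^2" by (rule sq_split)
      also have "(D (real k / real J))^2 \<le> \<theta>^2"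
      proof -
        have "\<bar>D (real k / real J)\<bar> \<le> \<theta>" using Dg k(1) by blast
        hence "\<bar>D (real k / real J)\<bar>^2 \<le> \<theta>^2" by (rule power_mono) simp
        thus ?thesis by simp
      qed
      also have "(D x - D (real k / real J))^2 \<le> \<beta> * (1 / real J)"
      proof -
        have "(D x - D (real k / real J))^2 \<le> \<beta> * \<bar>x - real k / real J\<bar>" using DH x k(3) by blast
        also have "\<dots> \<le> \<beta> * (1 / real J)" using k(2) b by (intro mult_left_mono) auto
        finally show ?thesis .
      qed
      finally have "(D x)^2 \<le> 2 * \<theta>^2 + 2 * (\<beta> * (1 / real J))" by simp
      also have "\<dots> \<le> \<eta>" using th2 Jb by simp
      finally show ?thesis .
    qed
    define A where "A = \<beta> * \<delta> powr \<gamma> / c"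
    define B where "B = \<eta> * \<delta> powr (-\<alpha>) / c"
    have A0: "A \<ge> 0" using b c d0 by (simp add: A_def)
    have B0: "B \<ge> 0" using eta0 c d0 by (simp add: B_def)
    have ptw: "(D x)^2 / a x \<le> A * x powr (-\<alpha>/2) + B" if x: "x \<in> {0<..<1}" for x
    proof -
      have ax: "a x > 0" "c * x powr \<alpha> \<le> a x" using x apos alow by auto
      have xp: "x powr \<alpha> > 0" using x by simp
      show ?thesis
      proof (cases "x < \<delta>")
        case True
        have D2: "(D x)^2 \<le> \<beta> * x" by (rule holder_sq0[OF DH D0]) (use x in auto)
        have "(D x)^2 / a x \<le> (\<beta> * x) / (c * x powr \<alpha>)"
          using D2 ax xp c b x by (intro frac_le) auto
        also have "\<dots> = (\<beta> / c) * (x powr \<gamma> * x powr (-\<alpha>/2))"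
        proof -
          have "x powr \<gamma> * x powr (-\<alpha>/2) = x powr (1 - \<alpha>)"
          proof -
            have "\<gamma> + (-\<alpha>/2) = 1 - \<alpha>" by (simp add: \<gamma>_def field_simps)
            thus ?thesis using x by (simp add: powr_add[symmetric])
          qed
          also have "\<dots> = x / x powr \<alpha>" using x by (simp add: powr_diff)
          finally show ?thesis by simp
        qed
        also have "\<dots> \<le> (\<beta> / c) * (\<delta> powr \<gamma> * x powr (-\<alpha>/2))"
          using True x g0 b c by (intro mult_left_mono mult_right_mono powr_mono2) auto
        also have "\<dots> = A * x powr (-\<alpha>/2)" by (simp add: A_def)
        finally show ?thesis using B0 by linarith
      next
        case False
        hence xd: "\<delta> \<le> x" by simp
        have D2: "(D x)^2 \<le> \<eta>" by (rule far) (use x in auto)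
        have dpa: "\<delta> powr \<alpha> \<le> x powr \<alpha>" using xd d0 a0 by (intro powr_mono2) auto
        have dpa0: "\<delta> powr \<alpha> > 0" using d0 by simp
        have "(D x)^2 / a x \<le> \<eta> / (c * \<delta> powr \<alpha>)"
        proof (rule frac_le)
          show "0 \<le> \<eta>" using eta0 by simp
          show "(D x)^2 \<le> \<eta>" by (rule D2)
          show "0 < c * \<delta> powr \<alpha>" using c dpa0 by simp
          have "c * \<delta> powr \<alpha> \<le> c * x powr \<alpha>" using dpa c by (simp add: mult_left_mono)
          thus "c * \<delta> powr \<alpha> \<le> a x" using ax(2) by linarith
        qed
        also have "\<dots> = B" using d0 by (simp add: B_def powr_minus divide_simps)
        finally show ?thesis using A0 by (simp add: add_increasing)
      qed
    qed
    have ub: "set_integrable lborel {0<..<1} (\<lambda>x. A * x powr (-\<alpha>/2) + B * 1)"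
      by (rule set_int_lin[OF Ii set_int_one01])
    have "nL2w a D = (LBINT x. indicator {0<..<1} x * ((D x)^2 / a x))"
      by (simp add: nL2w_def set_lebesgue_integral_def)
    also have "\<dots> \<le> (LBINT x. indicator {0<..<1} x *\<^sub>R (A * x powr (-\<alpha>/2) + B * 1))"
    proof (rule integral_mono_AE')
      show "integrable lborel (\<lambda>x. indicator {0<..<1} x *\<^sub>R (A * x powr (-\<alpha>/2) + B * 1))"
        using ub by (simp only: set_integrable_def)
      show "AE x in lborel. indicator {0<..<1} x * ((D x)^2 / a x) \<le> indicator {0<..<1} x *\<^sub>R (A * x powr (-\<alpha>/2) + B * 1)"
        by (rule AE_I2) (use ptw in \<open>auto simp: indicator_def\<close>)
      show "AE x in lborel. 0 \<le> indicator {0<..<1} x *\<^sub>R (A * x powr (-\<alpha>/2) + B * 1)"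
        by (rule AE_I2) (use A0 B0 in \<open>auto simp: indicator_def\<close>)
    qed
    also have "\<dots> = (LINT x:{0<..<1}|lborel. A * x powr (-\<alpha>/2) + B * 1)"
      by (simp only: set_lebesgue_integral_def)
    also have "\<dots> = A * I + B * 1"
      using set_int_lin_eq[OF Ii set_int_one01, of A B] set_int_one01_val by (simp add: I_def)
    also have "A * I \<le> \<eta>0 / 2"
    proof -
      have "A * I = \<beta> * I * e' / c" by (simp add: A_def dg)
      also have "\<dots> \<le> \<beta> * I * (\<eta>0 * c / (2 * (\<beta> * I + 1))) / c"
        using b I0 c by (intro divide_right_mono mult_left_mono) (auto simp: e'_def)
      also have "\<dots> = \<eta>0 / 2 * (\<beta> * I / (\<beta> * I + 1))" by (rule aux_alg[OF c])
      also have "\<dots> \<le> \<eta>0 / 2 * 1" using e bI b I0 by (intro mult_left_mono) auto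
      finally show ?thesis by simp
    qed
    also have "B * 1 = \<eta>0 / 2"
    proof -
      have pp: "\<delta> powr \<alpha> * \<delta> powr (-\<alpha>) = 1" using d0 by (simp add: powr_add[symmetric])
      have "B * 1 = (\<eta>0 / 2) * (c / c) * (\<delta> powr \<alpha> * \<delta> powr (-\<alpha>))"
        unfolding B_def \<eta>_def by simp
      also have "\<dots> = \<eta>0 / 2" using pp c by simp
      finally show ?thesis .
    qed
    finally show "nL2w a D \<le> \<eta>0" by simp
  qed
qed

lemma diag_conv:
  fixes X :: "nat \<Rightarrow> 'i::countable \<Rightarrow> real"
  assumes bnd: "\<And>i. \<exists>B. \<forall>n. \<bar>X n i\<bar> \<le> B"
  shows "\<exists>r. strict_mono r \<and> (\<forall>i. convergent (\<lambda>n. X (r n) i))"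
proof -
  define P where "P k s \<longleftrightarrow> convergent (\<lambda>n. X (s n) (from_nat k))" for k and s :: "nat \<Rightarrow> nat"
  interpret S: subseqs P
  proof
    fix k and s :: "nat \<Rightarrow> nat" assume s: "strict_mono s"
    obtain B where B: "\<forall>n. \<bar>X n (from_nat k)\<bar> \<le> B" using bnd by blast
    have "bounded (range (\<lambda>n. X (s n) (from_nat k)))"
      unfolding bounded_iff using B by auto
    then obtain l r' where r': "strict_mono r'" "((\<lambda>n. X (s n) (from_nat k)) \<circ> r') \<longlonglongrightarrow> l"
      using bounded_imp_convergent_subsequence by blast
    show "\<exists>r'. strict_mono r' \<and> P k (s \<circ> r')"
      using r' by (auto simp: P_def convergent_def o_def)
  qed
  have stable: "P n (s \<circ> r)" if "strict_mono r" "P n s" for r s n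
  proof -
    from that(2) obtain l where "(\<lambda>m. X (s m) (from_nat n)) \<longlonglongrightarrow> l" by (auto simp: P_def convergent_def)
    hence "((\<lambda>m. X (s m) (from_nat n)) \<circ> r) \<longlonglongrightarrow> l" by (rule LIMSEQ_subseq_LIMSEQ[OF _ that(1)])
    thus ?thesis by (auto simp: P_def convergent_def o_def)
  qed
  have "P k (S.diagseq \<circ> (+) (Suc k))" for k by (rule S.diagseq_holds) (rule stable)
  hence conv: "convergent (\<lambda>n. X (S.diagseq n) (from_nat k))" for k
  proof -
    from \<open>P k (S.diagseq \<circ> (+) (Suc k))\<close> obtain l where
      "(\<lambda>n. X (S.diagseq (n + Suc k)) (from_nat k)) \<longlonglongrightarrow> l"
      by (auto simp: P_def convergent_def o_def add.commute)
    hence "(\<lambda>n. X (S.diagseq n) (from_nat k)) \<longlonglongrightarrow> l" by (rule LIMSEQ_offset)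
    thus ?thesis by (auto simp: convergent_def)
  qed
  show ?thesis
  proof (intro exI[of _ S.diagseq] conjI allI)
    show "strict_mono S.diagseq" by (rule S.subseq_diagseq)
    fix i :: 'i
    show "convergent (\<lambda>n. X (S.diagseq n) i)" using conv[of "to_nat i"] by simp
  qed
qed

lemma interval_index:
  fixes t T :: real and m :: nat
  assumes m: "m > 0" and T: "T > 0" and t: "t \<in> {0..T}"
  shows "\<exists>i<m. real i * T / real m \<le> t \<and> t \<le> (real i + 1) * T / real m"
proof -
  define q where "q = t * real m / T"
  have q0: "0 \<le> q" using t T by (simp add: q_def)
  have qm: "q \<le> real m" using t T m by (simp add: q_def field_simps)
  define i where "i = min (m - 1) (nat \<lfloor>q\<rfloor>)"
  have im: "i < m" using m by (simp add: i_def)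
  have iq: "real i \<le> q"
  proof -
    have "real (nat \<lfloor>q\<rfloor>) \<le> q" using q0 by simp
    thus ?thesis by (simp add: i_def)
  qed
  have qi: "q \<le> real i + 1"
  proof (cases "nat \<lfloor>q\<rfloor> \<le> m - 1")
    case True
    hence "i = nat \<lfloor>q\<rfloor>" by (simp add: i_def)
    moreover have "q < real (nat \<lfloor>q\<rfloor>) + 1" using q0 by linarith
    ultimately show ?thesis by simp
  next
    case False
    hence "i = m - 1" by (simp add: i_def)
    hence "real i + 1 = real m" using m by simp
    thus ?thesis using qm by simp
  qed
  have Tm: "T / real m > 0" using T m by simp
  have "real i * T / real m \<le> t"
  proof -
    have "real i * T / real m = real i * (T / real m)" by simp
    also have "\<dots> \<le> q * (T / real m)" using iq Tm by (intro mult_right_mono) auto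
    also have "q * (T / real m) = t" using T m by (simp add: q_def)
    finally show ?thesis .
  qed
  moreover have "t \<le> (real i + 1) * T / real m"
  proof -
    have "t = q * (T / real m)" using T m by (simp add: q_def)
    also have "\<dots> \<le> (real i + 1) * (T / real m)" using qi Tm by (intro mult_right_mono) auto
    finally show ?thesis by simp
  qed
  ultimately show ?thesis using im by blast
qed

lemma sq_diff_le: "((p::real) - q)^2 \<le> 2*p^2 + 2*q^2"
  using sq_split2[of p "-q"] by simp

lemma cauchy_step:
  fixes V :: "nat \<Rightarrow> real \<Rightarrow> real \<Rightarrow> real" and G :: "nat \<Rightarrow> nat \<Rightarrow> nat \<Rightarrow> real \<Rightarrow> real"
    and \<beta> :: "nat \<Rightarrow> real"
  assumes c: "c > 0" and alow: "\<forall>x\<in>{0<..1}. c * x powr \<alpha> \<le> a x" and a0: "0 < \<alpha>" and al: "\<alpha> < 2"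
    and apos: "\<forall>x\<in>{0<..1}. a x > 0" and M: "\<forall>x\<in>{0..1}. a x \<le> M"
    and am: "set_borel_measurable lborel {0<..<1} a" and T: "T > 0" and C0: "C \<ge> 0"
    and VY: "\<And>n. inY a T (V n)"
    and b: "\<And>m. \<beta> m \<ge> 0"
    and hG0: "\<And>n m i. G n m i 0 = 0"
    and hGH: "\<And>n m i. \<forall>x\<in>{0..1}. \<forall>y\<in>{0..1}. (G n m i x - G n m i y)^2 \<le> \<beta> m * \<bar>x - y\<bar>"
    and hGA: "\<And>n m i t. 0 < m \<Longrightarrow> i < m \<Longrightarrow> t \<in> {0..T} \<Longrightarrow> real i * T / real m \<le> t \<Longrightarrow> t \<le> (real i + 1) * T / real m
       \<Longrightarrow> nL2w a (\<lambda>x. V n t x - G n m i x) \<le> C * T / real m"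
    and r: "strict_mono r"
    and conv: "\<And>m i k J. k \<le> J \<Longrightarrow> convergent (\<lambda>n. G (r n) m i (real k / real J))"
    and e: "\<epsilon> > 0"
  shows "\<exists>N0. \<forall>n\<ge>N0. \<forall>p\<ge>N0. \<forall>t\<in>{0..T}. nL2w a (\<lambda>x. V (r n) t x - V (r p) t x) < \<epsilon>"
proof -
  obtain m :: nat where m: "12 * C * T / \<epsilon> < real m" using reals_Archimedean2 by blast
  have "0 \<le> 12 * C * T / \<epsilon>" using C0 T e by simp
  hence mp: "real m > 0" using m by linarith
  hence m0: "m > 0" by simp
  have CTm: "6 * (C * T / real m) < \<epsilon> / 2"
  proof -
    have "12 * C * T < \<epsilon> * real m" using m e by (simp add: field_simps)
    thus ?thesis using mp by (simp add: field_simps)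
  qed
  obtain J :: nat and \<theta> where J: "J > 0" and th: "\<theta> > 0"
    and HS: "\<And>D. D 0 = 0 \<Longrightarrow> (\<forall>x\<in>{0..1}. \<forall>y\<in>{0..1}. (D x - D y)^2 \<le> (4 * \<beta> m) * \<bar>x - y\<bar>)
      \<Longrightarrow> (\<forall>k\<le>J. \<bar>D (real k / real J)\<bar> \<le> \<theta>) \<Longrightarrow> nL2w a D \<le> \<epsilon> / 16"
    using holder_N_small[OF c alow a0 al apos, of "4 * \<beta> m" "\<epsilon> / 16"] b[of m] e by auto
  define A where "A = {..<m} \<times> {..J}"
  have Af: "finite A" by (simp add: A_def)
  define L where "L ik = lim (\<lambda>n. G (r n) m (fst ik) (real (snd ik) / real J))" for ik
  have ev: "eventually (\<lambda>n. \<forall>ik\<in>A. \<bar>G (r n) m (fst ik) (real (snd ik) / real J) - L ik\<bar> < \<theta>/2) sequentially"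
  proof (rule eventually_ball_finite[OF Af], rule ballI)
    fix ik assume ikA: "ik \<in> A"
    have "snd ik \<le> J" using ikA by (auto simp: A_def)
    hence "(\<lambda>n. G (r n) m (fst ik) (real (snd ik) / real J)) \<longlonglongrightarrow> L ik"
      unfolding L_def using conv by (simp add: convergent_LIMSEQ_iff)
    hence "eventually (\<lambda>n. dist (G (r n) m (fst ik) (real (snd ik) / real J)) (L ik) < \<theta>/2) sequentially"
      using th by (intro tendstoD) auto
    thus "eventually (\<lambda>n. \<bar>G (r n) m (fst ik) (real (snd ik) / real J) - L ik\<bar> < \<theta>/2) sequentially"
      by (simp add: dist_real_def)
  qed
  then obtain N0 where N0: "\<And>n. n \<ge> N0 \<Longrightarrow> \<forall>ik\<in>A. \<bar>G (r n) m (fst ik) (real (snd ik) / real J) - L ik\<bar> < \<theta>/2"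
    by (auto simp: eventually_sequentially)
  have GL: "L2w a (G n m i)" for n i
    by (rule holder_L2w[OF c alow al apos M am hGH hG0 b])
  show ?thesis
  proof (intro exI[of _ N0] allI impI ballI)
    fix n p t assume n: "n \<ge> N0" and p: "p \<ge> N0" and t: "t \<in> {0..T}"
    obtain i where i: "i < m" "real i * T / real m \<le> t" "t \<le> (real i + 1) * T / real m"
      using interval_index[OF m0 T t] by blast
    define g1 where "g1 = G (r n) m i"
    define g2 where "g2 = G (r p) m i"
    have VL: "L2w a (V q t)" for q using VY[of q] t by (auto simp: inY_def)
    have "nL2w a (\<lambda>x. V (r n) t x - V (r p) t x) \<le> 2 * nL2w a (\<lambda>x. V (r n) t x - g1 x) + 4 * nL2w a (\<lambda>x. g1 x - g2 x) + 4 * nL2w a (\<lambda>x. g2 x - V (r p) t x)"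
      unfolding g1_def g2_def by (rule N3[OF apos am M VL GL GL VL])
    also have "nL2w a (\<lambda>x. V (r n) t x - g1 x) \<le> C * T / real m"
      unfolding g1_def by (rule hGA[OF m0 i(1) t i(2,3)])
    also have "nL2w a (\<lambda>x. g2 x - V (r p) t x) \<le> C * T / real m"
      using hGA[OF m0 i(1) t i(2,3), of "r p"] N_swap[of a g2 "V (r p) t"] unfolding g2_def by simp
    also have "nL2w a (\<lambda>x. g1 x - g2 x) \<le> \<epsilon> / 16"
    proof (rule HS)
      show "g1 0 - g2 0 = 0" by (simp add: g1_def g2_def hG0)
      show "\<forall>x\<in>{0..1}. \<forall>y\<in>{0..1}. (g1 x - g2 x - (g1 y - g2 y))^2 \<le> (4 * \<beta> m) * \<bar>x - y\<bar>"
      proof (intro ballI)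
        fix x y :: real assume x: "x \<in> {0..1}" and y: "y \<in> {0..1}"
        have "(g1 x - g2 x - (g1 y - g2 y))^2 = ((g1 x - g1 y) - (g2 x - g2 y))^2" by (simp add: algebra_simps)
        also have "\<dots> \<le> 2 * (g1 x - g1 y)^2 + 2 * (g2 x - g2 y)^2" by (rule sq_diff_le)
        also have "\<dots> \<le> 2 * (\<beta> m * \<bar>x - y\<bar>) + 2 * (\<beta> m * \<bar>x - y\<bar>)"
          using hGH[of "r n" m i] hGH[of "r p" m i] x y unfolding g1_def g2_def
          by (intro add_mono mult_left_mono) auto
        finally show "(g1 x - g2 x - (g1 y - g2 y))^2 \<le> (4 * \<beta> m) * \<bar>x - y\<bar>" by simp
      qed
      show "\<forall>k\<le>J. \<bar>g1 (real k / real J) - g2 (real k / real J)\<bar> \<le> \<theta>"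
      proof (intro allI impI)
        fix k assume k: "k \<le> J"
        have ik: "(i,k) \<in> A" using i(1) k by (simp add: A_def)
        have "\<bar>g1 (real k / real J) - L (i,k)\<bar> < \<theta>/2" using N0[OF n] ik unfolding g1_def by fastforce
        moreover have "\<bar>g2 (real k / real J) - L (i,k)\<bar> < \<theta>/2" using N0[OF p] ik unfolding g2_def by fastforce
        ultimately show "\<bar>g1 (real k / real J) - g2 (real k / real J)\<bar> \<le> \<theta>" by linarith
      qed
    qed
    finally have "nL2w a (\<lambda>x. V (r n) t x - V (r p) t x) \<le> 6 * (C * T / real m) + \<epsilon> / 4" by simp
    also have "\<dots> < \<epsilon>" using CTm e by linarith
    finally show "nL2w a (\<lambda>x. V (r n) t x - V (r p) t x) < \<epsilon>" .
  qed
qed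

lemma AE_dense:
  assumes ae: "AE t in lborel. Q t" and ab: "(a::real) < b"
  shows "\<exists>t. a < t \<and> t < b \<and> Q t"
proof (rule ccontr)
  assume "\<not> (\<exists>t. a < t \<and> t < b \<and> Q t)"
  hence sub: "{a<..<b} \<subseteq> {t \<in> space lborel. \<not> Q t}" by auto
  from ae obtain N where N: "{t \<in> space lborel. \<not> Q t} \<subseteq> N" "emeasure lborel N = 0" "N \<in> sets lborel"
    by (rule AE_E)
  have "emeasure lborel {a<..<b} \<le> emeasure lborel N"
    using sub N by (intro emeasure_mono) auto
  also have "\<dots> = 0" using N by simp
  finally have "emeasure lborel {a<..<b} = 0" by simp
  thus False using ab by (simp add: emeasure_lborel_Ioo)
qed

lemma set_int_add:
  fixes f g :: "'a \<Rightarrow> real"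
  assumes "set_integrable M A f" "set_integrable M A g"
  shows "set_integrable M A (\<lambda>x. f x + g x)"
  using set_int_lin[OF assms, of 1 1] by simp

lemma Qpos: "p \<in> Qset T \<Longrightarrow> (\<forall>x\<in>{0<..1}. a x > 0) \<Longrightarrow> a (snd p) > 0"
  by (auto simp: Qset_def)

lemma normX2_bounds:
  assumes apos: "\<forall>x\<in>{0<..1}. a x > 0" and X: "inX a T u ut ux uxx"
  shows "(LINT p:Qset T|lborel. (case p of (t,x) \<Rightarrow> (ut t x)^2 / a x)) \<le> normX2 a T u ut ux uxx"
    and "(LINT p:Qset T|lborel. (case p of (t,x) \<Rightarrow> (ux t x)^2)) \<le> normX2 a T u ut ux uxx"
    and "0 \<le> normX2 a T u ut ux uxx"
proof -
  define f1 where "f1 p = (case p of (t,x) \<Rightarrow> (u t x)^2 / a x)" for p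
  define f2 where "f2 p = (case p of (t,x) \<Rightarrow> (ux t x)^2)" for p
  define f3 where "f3 p = (case p of (t,x) \<Rightarrow> (a x * uxx t x)^2 / a x)" for p
  define f4 where "f4 p = (case p of (t,x) \<Rightarrow> (ut t x)^2 / a x)" for p
  have i1: "set_integrable lborel (Qset T) f1" using X by (simp add: inX_def f1_def[abs_def])
  have i2: "set_integrable lborel (Qset T) f2" using X by (simp add: inX_def f2_def[abs_def])
  have i3: "set_integrable lborel (Qset T) f3" using X by (simp add: inX_def f3_def[abs_def])
  have i4: "set_integrable lborel (Qset T) f4" using X by (simp add: inX_def f4_def[abs_def])
  have n1: "0 \<le> f1 p" "0 \<le> f2 p" "0 \<le> f3 p" "0 \<le> f4 p" if "p \<in> Qset T" for p
    using Qpos[OF that apos] by (auto simp: f1_def f2_def f3_def f4_def split: prod.splits)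
  have isum: "set_integrable lborel (Qset T) (\<lambda>p. f1 p + f2 p + f3 p + f4 p)"
    by (intro set_int_add i1 i2 i3 i4)
  have eqn: "normX2 a T u ut ux uxx = (LINT p:Qset T|lborel. f1 p + f2 p + f3 p + f4 p)"
    unfolding normX2_def f1_def f2_def f3_def f4_def by (simp add: case_prod_beta')
  show "(LINT p:Qset T|lborel. (case p of (t,x) \<Rightarrow> (ut t x)^2 / a x)) \<le> normX2 a T u ut ux uxx"
    unfolding eqn f4_def[symmetric] by (rule set_integral_mono[OF i4 isum]) (use n1 in auto)
  show "(LINT p:Qset T|lborel. (case p of (t,x) \<Rightarrow> (ux t x)^2)) \<le> normX2 a T u ut ux uxx"
    unfolding eqn f2_def[symmetric] by (rule set_integral_mono[OF i2 isum]) (use n1 in auto)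
  show "0 \<le> normX2 a T u ut ux uxx"
    unfolding eqn by (rule set_int_nonneg) (use n1 in auto)
qed

lemma N_zero_fun: "nL2w a (\<lambda>x. 0) = 0"
  by (simp add: nL2w_def)

lemma seq_A:
  assumes acont: "continuous_on {0..1} a" and apos: "\<forall>x\<in>{0<..1}. a x > 0"
    and M: "\<forall>x\<in>{0..1}. a x \<le> M" and T: "T > 0"
    and X: "inX a T u ut ux uxx" and NC: "normX2 a T u ut ux uxx \<le> C"
    and Y: "inY a T v"
    and AEuv: "AE p in lborel. p \<in> Qset T \<longrightarrow> u (fst p) (snd p) = v (fst p) (snd p)"
  shows "\<forall>t\<in>{0..T}. \<forall>s\<in>{0..T}. nL2w a (\<lambda>x. v t x - v s x) \<le> \<bar>t - s\<bar> * C"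
proof -
  have am: "set_borel_measurable lborel {0<..<1} a" by (rule a_meas[OF acont])
  define K where "K = (LINT p:Qset T|lborel. (case p of (t,x) \<Rightarrow> (ut t x)^2 / a x))"
  obtain P where P1: "\<forall>t\<in>{0..T}. L2w a (P t)"
    and P2: "\<forall>t\<in>{0..T}. \<forall>s\<in>{0..T}. nL2w a (\<lambda>x. P t x - P s x) \<le> \<bar>t - s\<bar> * K"
    and P5: "AE p in lborel. p \<in> Qset T \<longrightarrow> u (fst p) (snd p) = P (fst p) (snd p)"
    using X_facts[OF acont apos M T X] unfolding K_def by blast
  have KC: "K \<le> C" using normX2_bounds(1)[OF apos X] NC unfolding K_def by linarith
  have ap: "\<And>x. 0 < x \<Longrightarrow> x < 1 \<Longrightarrow> 0 < a x" using apos by auto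
  have K0: "0 \<le> K" unfolding K_def by (rule set_int_nonneg) (auto simp: Qset_def split: prod.splits intro!: divide_nonneg_pos ap)
  have VL: "L2w a (v t)" if "t \<in> {0..T}" for t using Y that by (auto simp: inY_def)
  have vc: "((\<lambda>t'. nL2w a (\<lambda>x. v t' x - v t x)) \<longlongrightarrow> 0) (at t within {0..T})" if "t \<in> {0..T}" for t
    using Y that by (auto simp: inY_def)
  have AEvP: "AE p in lborel \<Otimes>\<^sub>M lborel. p \<in> Qset T \<longrightarrow> v (fst p) (snd p) = P (fst p) (snd p)"
    using AEuv P5 unfolding lborel_prod by eventually_elim auto
  have pair: "AE t in lborel. AE x in lborel. (t,x) \<in> Qset T \<longrightarrow> v t x = P t x"
    using lborel_pair.AE_pair[OF AEvP] by simp
  have Nz_ae: "AE t in lborel. t \<in> {0<..<T} \<longrightarrow> nL2w a (\<lambda>x. v t x - P t x) = 0"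
    using pair
  proof eventually_elim
    case (elim t)
    show ?case
    proof
      assume t: "t \<in> {0<..<T}"
      hence t': "t \<in> {0..T}" by simp
      have "nL2w a (\<lambda>x. v t x - P t x) = nL2w a (\<lambda>x. 0)"
      proof (rule N_cong_AE[OF _ _ am])
        show "set_borel_measurable lborel {0<..<1} (\<lambda>x. v t x - P t x)"
          by (rule set_meas_diff) (use VL[OF t'] P1 t' in \<open>auto simp: L2w_def\<close>)
        show "set_borel_measurable lborel {0<..<1} (\<lambda>x. 0::real)" by (simp add: set_borel_measurable_def)
        show "AE x in lborel. x \<in> {0<..<1} \<longrightarrow> v t x - P t x = 0"
          using elim by eventually_elim (use t in \<open>auto simp: Qset_def\<close>)
      qed
      thus "nL2w a (\<lambda>x. v t x - P t x) = 0" by (simp add: N_zero_fun)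
    qed
  qed
  have Nz: "nL2w a (\<lambda>x. v t x - P t x) = 0" if t: "t \<in> {0..T}" for t
  proof (rule ccontr)
    assume "nL2w a (\<lambda>x. v t x - P t x) \<noteq> 0"
    hence d0: "nL2w a (\<lambda>x. v t x - P t x) > 0" using nL2w_nonneg[OF apos] by (simp add: order_less_le)
    define d where "d = nL2w a (\<lambda>x. v t x - P t x)"
    have dpos: "d > 0" using d0 by (simp add: d_def)
    have "eventually (\<lambda>t'. nL2w a (\<lambda>x. v t' x - v t x) < d/8) (at t within {0..T})"
      using order_tendstoD(2)[OF vc[OF t], of "d/8"] dpos by simp
    then obtain \<delta>1 where d1: "\<delta>1 > 0" and d1P: "\<And>t'. t' \<in> {0..T} \<Longrightarrow> t' \<noteq> t \<Longrightarrow> dist t' t < \<delta>1 \<Longrightarrow> nL2w a (\<lambda>x. v t' x - v t x) < d/8"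
      unfolding eventually_at by blast
    define \<delta> where "\<delta> = min \<delta>1 (d / (8 * (K + 1)))"
    have dl: "\<delta> > 0" using d1 dpos K0 by (simp add: \<delta>_def)
    have lohi: "max 0 (t - \<delta>) < min T (t + \<delta>)" using t T dl by auto
    obtain t' where t': "max 0 (t - \<delta>) < t'" "t' < min T (t + \<delta>)"
      and gt': "t' \<in> {0<..<T} \<longrightarrow> nL2w a (\<lambda>x. v t' x - P t' x) = 0"
      using AE_dense[OF Nz_ae lohi] by blast
    have t'in: "t' \<in> {0<..<T}" using t' by auto
    hence t'01: "t' \<in> {0..T}" by simp
    have z: "nL2w a (\<lambda>x. v t' x - P t' x) = 0" using gt' t'in by blast
    have dist: "\<bar>t' - t\<bar> < \<delta>" using t' by auto
    have a1: "nL2w a (\<lambda>x. v t x - v t' x) < d/8"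
    proof (cases "t' = t")
      case True thus ?thesis using dpos by (simp add: N_zero_fun)
    next
      case False
      have "nL2w a (\<lambda>x. v t' x - v t x) < d/8"
        using d1P[OF t'01 False] dist by (simp add: dist_real_def \<delta>_def)
      thus ?thesis using N_swap[of a "v t" "v t'"] by simp
    qed
    have a3: "nL2w a (\<lambda>x. P t' x - P t x) \<le> d/8"
    proof -
      have "nL2w a (\<lambda>x. P t' x - P t x) \<le> \<bar>t' - t\<bar> * K" using P2 t'01 t by blast
      also have "\<dots> \<le> \<delta> * K" using dist K0 by (intro mult_right_mono) auto
      also have "\<dots> \<le> (d / (8 * (K + 1))) * K" using K0 by (intro mult_right_mono) (auto simp: \<delta>_def)
      also have "\<dots> = d / 8 * (K / (K + 1))" using K0 by (simp add: field_simps)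
      also have "\<dots> \<le> d / 8 * 1" using dpos K0 by (intro mult_left_mono) auto
      finally show ?thesis by simp
    qed
    have "nL2w a (\<lambda>x. v t x - P t x) \<le> 2 * nL2w a (\<lambda>x. v t x - v t' x) + 4 * nL2w a (\<lambda>x. v t' x - P t' x) + 4 * nL2w a (\<lambda>x. P t' x - P t x)"
      by (rule N3[OF apos am M VL[OF t] VL[OF t'01] P1[rule_format, OF t'01] P1[rule_format, OF t]])
    also have "\<dots> < d" using a1 a3 z dpos by linarith
    finally show False by (simp add: d_def)
  qed
  show ?thesis
  proof (intro ballI)
    fix t s assume t: "t \<in> {0..T}" and s: "s \<in> {0..T}"
    have zt: "AE x in lborel. x \<in> {0<..<1} \<longrightarrow> v t x - P t x = 0"
      by (rule N_zero_AE[OF apos _ Nz[OF t]]) (use L2w_diff[OF apos am M VL[OF t] P1[rule_format, OF t]] in \<open>simp add: L2w_def\<close>)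
    have zs: "AE x in lborel. x \<in> {0<..<1} \<longrightarrow> v s x - P s x = 0"
      by (rule N_zero_AE[OF apos _ Nz[OF s]]) (use L2w_diff[OF apos am M VL[OF s] P1[rule_format, OF s]] in \<open>simp add: L2w_def\<close>)
    have "nL2w a (\<lambda>x. v t x - v s x) = nL2w a (\<lambda>x. P t x - P s x)"
    proof (rule N_cong_AE[OF _ _ am])
      show "set_borel_measurable lborel {0<..<1} (\<lambda>x. v t x - v s x)"
        by (rule set_meas_diff) (use VL[OF t] VL[OF s] in \<open>auto simp: L2w_def\<close>)
      show "set_borel_measurable lborel {0<..<1} (\<lambda>x. P t x - P s x)"
        by (rule set_meas_diff) (use P1 t s in \<open>auto simp: L2w_def\<close>)
      show "AE x in lborel. x \<in> {0<..<1} \<longrightarrow> v t x - v s x = P t x - P s x"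
        using zt zs by eventually_elim auto
    qed
    also have "\<dots> \<le> \<bar>t - s\<bar> * K" using P2 t s by blast
    also have "\<dots> \<le> \<bar>t - s\<bar> * C" using KC by (intro mult_left_mono) auto
    finally show "nL2w a (\<lambda>x. v t x - v s x) \<le> \<bar>t - s\<bar> * C" .
  qed
qed

lemma seq_B:
  assumes acont: "continuous_on {0..1} a" and apos: "\<forall>x\<in>{0<..1}. a x > 0"
    and T: "T > 0"
    and X: "inX a T u ut ux uxx" and NC: "normX2 a T u ut ux uxx \<le> C"
    and AEuv: "AE p in lborel. p \<in> Qset T \<longrightarrow> u (fst p) (snd p) = v (fst p) (snd p)"
    and m: "0 < m" and i: "i < m"
  shows "\<exists>g. g 0 = 0 \<and> (\<forall>x\<in>{0..1}. \<forall>y\<in>{0..1}. (g x - g y)^2 \<le> (2 * (C + 1) * real m / T) * \<bar>x - y\<bar>)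
    \<and> (\<exists>s. real i * T / real m \<le> s \<and> s \<le> (real i + 1) * T / real m \<and> s \<in> {0..T}
          \<and> (AE x in lborel. x \<in> {0<..<1} \<longrightarrow> v s x = g x))"
proof -
  have C0: "0 \<le> C" using normX2_bounds(3)[OF apos X] NC by linarith
  have uxm: "set_borel_measurable lborel (Qset T) (case_prod ux)"
    and ux2: "set_integrable lborel (Qset T) (\<lambda>(t,x). (ux t x)^2)"
    and AEH: "AE s in lborel. s \<in> {0<..<T} \<longrightarrow> H2w a (u s) (ux s) (uxx s)"
    using X by (auto simp: inX_def)
  have AEuv2: "AE p in lborel \<Otimes>\<^sub>M lborel. p \<in> Qset T \<longrightarrow> u (fst p) (snd p) = v (fst p) (snd p)"
    using AEuv unfolding lborel_prod .
  have pair: "AE s in lborel. AE x in lborel. (s,x) \<in> Qset T \<longrightarrow> u s x = v s x"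
    using lborel_pair.AE_pair[OF AEuv2] by simp
  define good where "good s \<longleftrightarrow> H1w a (u s) (ux s) \<and> (AE x in lborel. (s,x) \<in> Qset T \<longrightarrow> u s x = v s x)" for s
  have AEgood: "AE s in lborel. s \<in> {0<..<T} \<longrightarrow> good s"
    using AEH pair by eventually_elim (auto simp: good_def H2w_def)
  define h where "h p = ennreal (indicator (Qset T) p * (case_prod ux p)^2)" for p
  have hm: "h \<in> borel_measurable (lborel \<Otimes>\<^sub>M lborel)"
  proof -
    have "(\<lambda>p. indicator (Qset T) p * case_prod ux p) \<in> borel_measurable lborel"
      using uxm by (simp add: set_borel_measurable_def)
    hence "(\<lambda>p. (indicator (Qset T) p * case_prod ux p)^2) \<in> borel_measurable lborel"
      by (rule borel_measurable_power)
    moreover have "(\<lambda>p. (indicator (Qset T) p * case_prod ux p)^2) = (\<lambda>p. indicator (Qset T) p * (case_prod ux p)^2)"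
      by (auto simp: fun_eq_iff indicator_def power2_eq_square)
    ultimately have hm0: "(\<lambda>p. indicator (Qset T) p * (case_prod ux p)^2) \<in> borel_measurable lborel" by simp
    show ?thesis unfolding h_def[abs_def] lborel_prod by (use hm0 in measurable)
  qed
  define E where "E s = (\<integral>\<^sup>+ x. h (s,x) \<partial>lborel)" for s
  have Em: "E \<in> borel_measurable lborel"
    unfolding E_def by (rule lborel.borel_measurable_nn_integral_fst) (use hm in measurable)
  have tot: "(\<integral>\<^sup>+ s. E s \<partial>lborel) \<le> ennreal C"
  proof -
    have "(\<integral>\<^sup>+ s. E s \<partial>lborel) = integral\<^sup>N (lborel \<Otimes>\<^sub>M lborel) h"
      unfolding E_def by (rule lborel.nn_integral_fst[OF hm])
    also have "\<dots> = (\<integral>\<^sup>+ p. ennreal (indicator (Qset T) p * (case_prod ux p)^2) \<partial>lborel)"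
      by (simp add: h_def[abs_def] lborel_prod)
    also have "\<dots> = ennreal (LINT p:Qset T|lborel. (case p of (t,x) \<Rightarrow> (ux t x)^2))"
    proof -
      have fe: "(\<lambda>p. indicator (Qset T) p * (case_prod ux p)^2) = (\<lambda>p. indicator (Qset T) p *\<^sub>R (case p of (t,x) \<Rightarrow> (ux t x)^2))"
        by (auto simp: fun_eq_iff split: prod.splits)
      have ii: "integrable lborel (\<lambda>p. indicator (Qset T) p *\<^sub>R (case p of (t,x) \<Rightarrow> (ux t x)^2))"
        using ux2 by (simp only: set_integrable_def)
      have "(\<integral>\<^sup>+ p. ennreal (indicator (Qset T) p * (case_prod ux p)^2) \<partial>lborel)
          = (\<integral>\<^sup>+ p. ennreal (indicator (Qset T) p *\<^sub>R (case p of (t,x) \<Rightarrow> (ux t x)^2)) \<partial>lborel)"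
        by (intro nn_integral_cong) (auto split: prod.splits)
      also have "\<dots> = ennreal (LINT p:Qset T|lborel. (case p of (t,x) \<Rightarrow> (ux t x)^2))"
        unfolding set_lebesgue_integral_def
        by (rule nn_integral_eq_integral[OF ii]) (auto split: prod.splits)
      finally show ?thesis .
    qed
    also have "\<dots> \<le> ennreal C"
      using normX2_bounds(2)[OF apos X] NC by (intro ennreal_leI) linarith
    finally show ?thesis .
  qed
  define lo where "lo = real i * T / real m"
  define hi where "hi = (real i + 1) * T / real m"
  define I where "I = {lo<..<hi}"
  have mp: "real m > 0" using m by simp
  have lohi: "lo < hi" using T mp by (simp add: lo_def hi_def divide_strict_right_mono)
  have lo0: "0 \<le> lo" using T mp by (simp add: lo_def)
  have hiT: "hi \<le> T"
  proof -
    have "real i + 1 \<le> real m" using i by linarith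
    hence "(real i + 1) * T \<le> real m * T" using T by (intro mult_right_mono) auto
    thus ?thesis using mp by (simp add: hi_def field_simps)
  qed
  have IsubT: "I \<subseteq> {0<..<T}" using lo0 hiT by (auto simp: I_def)
  have hilo: "hi - lo = T / real m" by (simp add: hi_def lo_def field_simps add_divide_distrib)
  define \<beta> where "\<beta> = 2 * (C + 1) * real m / T"
  have b0: "\<beta> > 0" using C0 T mp by (simp add: \<beta>_def)
  have ex: "\<exists>s\<in>I. good s \<and> E s \<le> ennreal \<beta>"
  proof (rule ccontr)
    assume neg: "\<not> (\<exists>s\<in>I. good s \<and> E s \<le> ennreal \<beta>)"
    have ae: "AE s in lborel. ennreal \<beta> * indicator I s \<le> E s"
      using AEgood
    proof eventually_elim
      case (elim s)
      show ?case
      proof (cases "s \<in> I")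
        case True
        hence "good s" using elim IsubT by auto
        hence "\<not> E s \<le> ennreal \<beta>" using neg True by blast
        thus ?thesis using True by simp
      next
        case False thus ?thesis by simp
      qed
    qed
    have "ennreal (2 * (C + 1)) = ennreal \<beta> * emeasure lborel I"
    proof -
      have "emeasure lborel I = ennreal (T / real m)" using lohi hilo by (simp add: I_def emeasure_lborel_Ioo)
      hence "ennreal \<beta> * emeasure lborel I = ennreal (\<beta> * (T / real m))"
        using b0 T mp by (subst ennreal_mult) auto
      also have "\<beta> * (T / real m) = 2 * (C + 1)" using T mp by (simp add: \<beta>_def)
      finally show ?thesis by simp
    qed
    also have "\<dots> = (\<integral>\<^sup>+ s. ennreal \<beta> * indicator I s \<partial>lborel)"
      by (rule nn_integral_cmult_indicator[symmetric]) (simp add: I_def)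
    also have "\<dots> \<le> (\<integral>\<^sup>+ s. E s \<partial>lborel)" by (rule nn_integral_mono_AE[OF ae])
    also have "\<dots> \<le> ennreal C" by (rule tot)
    finally have le: "ennreal (2 * (C + 1)) \<le> ennreal C" .
    have "2 * (C + 1) \<le> C" using le ennreal_le_iff[OF C0] by blast
    thus False using C0 by (simp add: algebra_simps)
  qed
  then obtain s where sI: "s \<in> I" and gs: "good s" and Es: "E s \<le> ennreal \<beta>" by blast
  have s0T: "s \<in> {0<..<T}" using sI IsubT by auto
  have H1: "H1w a (u s) (ux s)" using gs by (simp add: good_def)
  have uxsm: "set_borel_measurable lborel {0<..<1} (ux s)"
    and uxs2: "set_integrable lborel {0<..<1} (\<lambda>x. (ux s x)^2)"
    and uprim: "AE x in lborel. x \<in> {0<..<1} \<longrightarrow> u s x = (LINT y:{0<..<x}|lborel. ux s y)"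
    using H1 by (auto simp: H1w_def)
  define g where "g y = (LINT z:{0<..<y}|lborel. ux s z)" for y
  have Eval: "E s = ennreal (LINT x:{0<..<1}|lborel. (ux s x)^2)"
  proof -
    have "E s = (\<integral>\<^sup>+ x. ennreal (indicator {0<..<1} x * (ux s x)^2) \<partial>lborel)"
      unfolding E_def h_def
    proof (rule nn_integral_cong)
      fix x
      show "ennreal (indicator (Qset T) (s, x) * (case (s, x) of (t, x) \<Rightarrow> ux t x)^2) = ennreal (indicator {0<..<1} x * (ux s x)^2)"
        using s0T by (auto simp: Qset_def indicator_def)
    qed
    also have "\<dots> = ennreal (LINT x:{0<..<1}|lborel. (ux s x)^2)"
      unfolding set_lebesgue_integral_def real_scaleR_def
      apply (rule nn_integral_eq_integral)
      using uxs2 by (simp_all add: set_integrable_def)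
    finally show ?thesis .
  qed
  have Eb: "(LINT x:{0<..<1}|lborel. (ux s x)^2) \<le> \<beta>"
    using Es b0 unfolding Eval by (simp add: ennreal_le_iff)
  show ?thesis
  proof (intro exI[of _ g] conjI ballI)
    show "g 0 = 0" by (simp add: g_def set_lebesgue_integral_def)
    fix x y :: real assume x: "x \<in> {0..1}" and y: "y \<in> {0..1}"
    have "(g x - g y)^2 \<le> \<bar>x - y\<bar> * (LINT z:{0<..<1}|lborel. (ux s z)^2)"
      unfolding g_def by (rule prim_holder[OF uxsm uxs2 x y])
    also have "\<dots> \<le> \<bar>x - y\<bar> * \<beta>" using Eb by (intro mult_left_mono) auto
    finally show "(g x - g y)^2 \<le> (2 * (C + 1) * real m / T) * \<bar>x - y\<bar>" by (simp add: \<beta>_def mult.commute)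
  next
    show "\<exists>s. real i * T / real m \<le> s \<and> s \<le> (real i + 1) * T / real m \<and> s \<in> {0..T}
          \<and> (AE x in lborel. x \<in> {0<..<1} \<longrightarrow> v s x = g x)"
    proof (intro exI[of _ s] conjI)
      show "real i * T / real m \<le> s" using sI by (simp add: I_def lo_def)
      show "s \<le> (real i + 1) * T / real m" using sI by (simp add: I_def hi_def)
      show "s \<in> {0..T}" using s0T by simp
      have uv: "AE x in lborel. (s,x) \<in> Qset T \<longrightarrow> u s x = v s x" using gs by (simp add: good_def)
      show "AE x in lborel. x \<in> {0<..<1} \<longrightarrow> v s x = g x"
        using uv uprim by eventually_elim (use s0T in \<open>auto simp: Qset_def g_def\<close>)
    qed
  qed
qed

theorem mainTheorem13:
  fixes a :: "real \<Rightarrow> real" and \<alpha> T :: real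
  assumes "continuous_on {0..1} a" and "a 0 = 0" and "\<forall>x\<in>{0<..1}. a x > 0"
    and "0 < \<alpha>" and "\<alpha> < 2"
    and "mono_on {0<..1} (\<lambda>x. x powr \<alpha> / a x)"
    and "T > 0"
  shows "(\<forall>u ut ux uxx. inX a T u ut ux uxx \<longrightarrow>
            (\<exists>v. inY a T v \<and> (AE p in lborel. p \<in> Qset T \<longrightarrow>
                    u (fst p) (snd p) = v (fst p) (snd p))))
       \<and> (\<forall>(u :: nat \<Rightarrow> real \<Rightarrow> real \<Rightarrow> real) ut ux uxx v C.
            (\<forall>n. inX a T (u n) (ut n) (ux n) (uxx n) \<and> normX2 a T (u n) (ut n) (ux n) (uxx n) \<le> C
                 \<and> inY a T (v n)
                 \<and> (AE p in lborel. p \<in> Qset T \<longrightarrow> u n (fst p) (snd p) = v n (fst p) (snd p)))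
            \<longrightarrow> (\<exists>r w. strict_mono r \<and> inY a T w
                  \<and> (\<forall>\<epsilon>>0. eventually (\<lambda>n. \<forall>t\<in>{0..T}. nL2w a (\<lambda>x. v (r n) t x - w t x) < \<epsilon>) sequentially)
                  \<and> ((\<lambda>n. LINT p:Qset T|lborel. (case p of (t,x) \<Rightarrow> (v (r n) t x - w t x)^2)) \<longlonglongrightarrow> 0)))"
proof -
  note acont = assms(1) and apos = assms(3) and a0 = assms(4) and al = assms(5)
    and amono = assms(6) and T = assms(7)
  obtain M where M: "\<forall>x\<in>{0..1}. a x \<le> M" using a_upper[OF acont] by blast
  obtain c where c: "c > 0" and alow: "\<forall>x\<in>{0<..1}. c * x powr \<alpha> \<le> a x"
    using a_lower[OF apos amono] by blast
  have am: "set_borel_measurable lborel {0<..<1} a" by (rule a_meas[OF acont])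
  show ?thesis
  proof (intro conjI allI impI)
    fix u ut ux uxx assume X: "inX a T u ut ux uxx"
    show "\<exists>v. inY a T v \<and> (AE p in lborel. p \<in> Qset T \<longrightarrow> u (fst p) (snd p) = v (fst p) (snd p))"
      by (rule part1[OF acont apos T X])
  next
    fix u :: "nat \<Rightarrow> real \<Rightarrow> real \<Rightarrow> real" and ut ux uxx v and C :: real
    assume H: "\<forall>n. inX a T (u n) (ut n) (ux n) (uxx n) \<and> normX2 a T (u n) (ut n) (ux n) (uxx n) \<le> C
                 \<and> inY a T (v n)
                 \<and> (AE p in lborel. p \<in> Qset T \<longrightarrow> u n (fst p) (snd p) = v n (fst p) (snd p))"
    have Xn: "inX a T (u n) (ut n) (ux n) (uxx n)" for n using H by blast
    have NCn: "normX2 a T (u n) (ut n) (ux n) (uxx n) \<le> C" for n using H by blast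
    have Yn: "inY a T (v n)" for n using H by blast
    have AEn: "AE p in lborel. p \<in> Qset T \<longrightarrow> u n (fst p) (snd p) = v n (fst p) (snd p)" for n using H by blast
    have C0: "0 \<le> C" using normX2_bounds(3)[OF apos Xn[of 0]] NCn[of 0] by linarith
    have A: "\<forall>t\<in>{0..T}. \<forall>s\<in>{0..T}. nL2w a (\<lambda>x. v n t x - v n s x) \<le> \<bar>t - s\<bar> * C" for n
      by (rule seq_A[OF acont apos M T Xn NCn Yn AEn])
    define \<beta> where "\<beta> m = 2 * (C + 1) * real m / T" for m :: nat
    have b0: "\<beta> m \<ge> 0" for m using C0 T by (simp add: \<beta>_def)
    define Bp where "Bp n m i g \<longleftrightarrow> g 0 = 0 \<and> (\<forall>x\<in>{0..1}. \<forall>y\<in>{0..1}. (g x - g y)^2 \<le> \<beta> m * \<bar>x - y\<bar>)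
      \<and> (\<exists>s. real i * T / real m \<le> s \<and> s \<le> (real i + 1) * T / real m \<and> s \<in> {0..T}
          \<and> (AE x in lborel. x \<in> {0<..<1} \<longrightarrow> v n s x = g x))" for n m i and g :: "real \<Rightarrow> real"
    have Bex: "\<exists>g. Bp n m i g" if "0 < m" "i < m" for n m i
      using seq_B[OF acont apos T Xn NCn AEn that] unfolding Bp_def \<beta>_def by blast
    define G where "G n m i = (if 0 < m \<and> i < m then (SOME g. Bp n m i g) else (\<lambda>x. 0))" for n m i
    have GB: "Bp n m i (G n m i)" if "0 < m" "i < m" for n m i
      using someI_ex[OF Bex[OF that]] that by (simp add: G_def)
    have hG0: "G n m i 0 = 0" for n m i
      using GB[of m i n] by (cases "0 < m \<and> i < m") (auto simp: G_def Bp_def)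
    have hGH: "\<forall>x\<in>{0..1}. \<forall>y\<in>{0..1}. (G n m i x - G n m i y)^2 \<le> \<beta> m * \<bar>x - y\<bar>" for n m i
    proof (cases "0 < m \<and> i < m")
      case True thus ?thesis using GB[of m i n] by (simp add: Bp_def)
    next
      case False thus ?thesis using b0[of m] by (auto simp: G_def)
    qed
    have hGA: "nL2w a (\<lambda>x. v n t x - G n m i x) \<le> C * T / real m"
      if m: "0 < m" and i: "i < m" and t: "t \<in> {0..T}" and ti1: "real i * T / real m \<le> t"
        and ti2: "t \<le> (real i + 1) * T / real m" for n m i t
    proof -
      obtain s where s1: "real i * T / real m \<le> s" and s2: "s \<le> (real i + 1) * T / real m"
        and s: "s \<in> {0..T}" and sae: "AE x in lborel. x \<in> {0<..<1} \<longrightarrow> v n s x = G n m i x"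
        using GB[OF m i, of n] unfolding Bp_def by blast
      have GL: "L2w a (G n m i)" by (rule holder_L2w[OF c alow al apos M am hGH hG0 b0])
      have VL: "L2w a (v n q)" if "q \<in> {0..T}" for q using Yn[of n] that by (auto simp: inY_def)
      have "nL2w a (\<lambda>x. v n t x - G n m i x) = nL2w a (\<lambda>x. v n t x - v n s x)"
      proof (rule N_cong_AE[OF _ _ am])
        show "set_borel_measurable lborel {0<..<1} (\<lambda>x. v n t x - G n m i x)"
          by (rule set_meas_diff) (use VL[OF t] GL in \<open>auto simp: L2w_def\<close>)
        show "set_borel_measurable lborel {0<..<1} (\<lambda>x. v n t x - v n s x)"
          by (rule set_meas_diff) (use VL[OF t] VL[OF s] in \<open>auto simp: L2w_def\<close>)
        show "AE x in lborel. x \<in> {0<..<1} \<longrightarrow> v n t x - G n m i x = v n t x - v n s x"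
          using sae by eventually_elim auto
      qed
      also have "\<dots> \<le> \<bar>t - s\<bar> * C" using A[of n] t s by blast
      also have "\<bar>t - s\<bar> \<le> T / real m"
      proof -
        have "(real i + 1) * T / real m - real i * T / real m = T / real m"
          by (simp add: field_simps add_divide_distrib)
        thus ?thesis using ti1 ti2 s1 s2 by linarith
      qed
      hence "\<bar>t - s\<bar> * C \<le> T / real m * C" using C0 by (intro mult_right_mono) auto
      finally show ?thesis by (simp add: mult.commute)
    qed
    define X where "X n idx = (case idx of (m, i, J, k) \<Rightarrow> G n m i (if k \<le> J then real k / real J else 0))"
      for n and idx :: "nat \<times> nat \<times> nat \<times> nat"
    have Xb: "\<exists>B. \<forall>n. \<bar>X n idx\<bar> \<le> B" for idx
    proof -
      obtain m i J k where idx: "idx = (m, i, J, k)" by (cases idx) auto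
      define q where "q = (if k \<le> J then real k / real J else 0)"
      have q: "q \<in> {0..1}" unfolding q_def by (auto simp: divide_le_eq_1)
      show ?thesis
      proof (intro exI[of _ "sqrt (\<beta> m)"] allI)
        fix n
        have "(G n m i q)^2 \<le> \<beta> m * q" by (rule holder_sq0[OF hGH hG0 q])
        also have "\<dots> \<le> \<beta> m" using q b0[of m] by (simp add: mult_left_le)
        finally have "sqrt ((G n m i q)^2) \<le> sqrt (\<beta> m)" by (rule real_sqrt_le_mono)
        thus "\<bar>X n idx\<bar> \<le> sqrt (\<beta> m)" by (simp add: X_def idx q_def[symmetric])
      qed
    qed
    have "\<exists>r. strict_mono r \<and> (\<forall>idx. convergent (\<lambda>n. X (r n) idx))"
      by (rule diag_conv) (rule Xb)
    then obtain r1 where r1: "strict_mono r1" and r1c: "\<forall>idx. convergent (\<lambda>n. X (r1 n) idx)"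
      by blast
    have conv: "convergent (\<lambda>n. G (r1 n) m i (real k / real J))" if "k \<le> J" for m i k J
      using r1c[rule_format, of "(m, i, J, k)"] that by (simp add: X_def)
    have cauchy: "\<exists>N0. \<forall>n\<ge>N0. \<forall>p\<ge>N0. \<forall>t\<in>{0..T}. nL2w a (\<lambda>x. v (r1 n) t x - v (r1 p) t x) < \<epsilon>"
      if e: "\<epsilon> > 0" for \<epsilon>
      by (rule cauchy_step[OF c alow a0 al apos M am T C0 Yn b0 hG0 hGH hGA r1 conv e])
    obtain r2 w where r2: "strict_mono r2" and wY: "inY a T w"
      and unif: "\<forall>\<epsilon>>0. eventually (\<lambda>n. \<forall>t\<in>{0..T}. nL2w a (\<lambda>x. v (r1 (r2 n)) t x - w t x) < \<epsilon>) sequentially"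
      and L2: "(\<lambda>n. LINT p:Qset T|lborel. (case p of (t,x) \<Rightarrow> (v (r1 (r2 n)) t x - w t x)^2)) \<longlonglongrightarrow> 0"
      using completion[OF acont apos M T, of "\<lambda>n. v (r1 n)"] Yn cauchy by blast
    show "\<exists>r w. strict_mono r \<and> inY a T w
                  \<and> (\<forall>\<epsilon>>0. eventually (\<lambda>n. \<forall>t\<in>{0..T}. nL2w a (\<lambda>x. v (r n) t x - w t x) < \<epsilon>) sequentially)
                  \<and> ((\<lambda>n. LINT p:Qset T|lborel. (case p of (t,x) \<Rightarrow> (v (r n) t x - w t x)^2)) \<longlonglongrightarrow> 0)"
      by (rule exI[of _ "r1 \<circ> r2"], rule exI[of _ w]) (use r1 r2 wY unif L2 in \<open>simp add: strict_mono_o\<close>)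
  qed
qed

end
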